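(* For any $n$-qubit density matrix $\rho$, $$\mathcal R(\rho)\ge2\Lambda^+(\rho)-1.$$ Furthermore, if $\rho$ is a single-qubit state, $$\mathcal R(\rho)\ge(1+\sqrt2)\Lambda^+(\rho)-\sqrt2.$$
   Context: $\mathrm S_n$ is the set of pure $n$-qubit stabilizer states and $\bar{\mathrm S}_n=\mathrm{conv}\{|\phi\rangle\langle\phi|:|\phi\rangle\in\mathrm S_n\}$. The robustness of magic is $\mathcal R(\rho)=\min\{\|q\|_1:\rho=\sum_jq_j|\phi_j\rangle\langle\phi_j|,\ q_j\in\mathbb R,\ |\phi_j\rangle\in\mathrm S_n\}$. The generalized robustness is $\Lambda^+(\rho)=\min\{\lambda:\rho\le\lambda\sigma,\ \sigma\in\bar{\mathrm S}_n\}$. *)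

theory Defs
  imports Complex_Main "Jordan_Normal_Form.Matrix"
begin

definition dagger :: "complex mat \<Rightarrow> complex mat" where
  "dagger A = mat (dim_col A) (dim_row A) (\<lambda>(i,j). cnj (A $$ (j,i)))"

definition outer :: "complex vec \<Rightarrow> complex mat" where
  "outer v = mat (dim_vec v) (dim_vec v) (\<lambda>(i,j). v $ i * cnj (v $ j))"

definition mtrace :: "complex mat \<Rightarrow> complex" where
  "mtrace A = (\<Sum>i<dim_row A. A $$ (i,i))"

definition psd :: "nat \<Rightarrow> complex mat \<Rightarrow> bool" where
  "psd d A \<longleftrightarrow> A \<in> carrier_mat d d \<and> dagger A = A \<and>
     (\<forall>v \<in> carrier_vec d. 0 \<le> Re (\<Sum>i<d. cnj (v $ i) * (A *\<^sub>v v) $ i))"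

definition density :: "nat \<Rightarrow> complex mat \<Rightarrow> bool" where
  "density n \<rho> \<longleftrightarrow> psd (2^n) \<rho> \<and> mtrace \<rho> = 1"

definition msum :: "nat \<Rightarrow> 'b set \<Rightarrow> ('b \<Rightarrow> complex mat) \<Rightarrow> complex mat" where
  "msum d F f = mat d d (\<lambda>(i,j). \<Sum>x\<in>F. f x $$ (i,j))"

text \<open>Single-qubit Paulis: 0 = I, 1 = X, 2 = Y, 3 = Z.\<close>
definition pauli1 :: "nat \<Rightarrow> complex mat" where
  "pauli1 k = (if k = 0 then mat_of_rows_list 2 [[1,0],[0,1]]
     else if k = 1 then mat_of_rows_list 2 [[0,1],[1,0]]
     else if k = 2 then mat_of_rows_list 2 [[0,-\<i>],[\<i>,0]]
     else mat_of_rows_list 2 [[1,0],[0,-1]])"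

text \<open>The n-qubit Pauli string s (tensor product of pauli1 (s k), k < n); qubit k
  corresponds to bit k of the basis index.\<close>
definition pauli_string :: "nat \<Rightarrow> (nat \<Rightarrow> nat) \<Rightarrow> complex mat" where
  "pauli_string n s = mat (2^n) (2^n)
     (\<lambda>(i,j). \<Prod>k<n. pauli1 (s k) $$ (i div 2^k mod 2, j div 2^k mod 2))"

definition signed_paulis :: "nat \<Rightarrow> complex mat set" where
  "signed_paulis n = {of_real \<sigma> \<cdot>\<^sub>m pauli_string n s | \<sigma> s.
       (\<sigma> = 1 \<or> \<sigma> = -1) \<and> (\<forall>k<n. s k < 4)}"

text \<open>Stabilizer group of a vector within the Pauli group (elements with phase \<plusminus>i
  can never stabilize a nonzero vector, so they are omitted).\<close>
definition stab_group :: "nat \<Rightarrow> complex vec \<Rightarrow> complex mat set" where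
  "stab_group n \<psi> = {P \<in> signed_paulis n. P *\<^sub>v \<psi> = \<psi>}"

definition stabilizer_state :: "nat \<Rightarrow> complex vec \<Rightarrow> bool" where
  "stabilizer_state n \<psi> \<longleftrightarrow> \<psi> \<in> carrier_vec (2^n) \<and>
     (\<Sum>i<2^n. (cmod (\<psi> $ i))^2) = 1 \<and> card (stab_group n \<psi>) = 2^n"

definition stab_projs :: "nat \<Rightarrow> complex mat set" where
  "stab_projs n = {outer \<psi> | \<psi>. stabilizer_state n \<psi>}"

definition robustness :: "nat \<Rightarrow> complex mat \<Rightarrow> real" where
  "robustness n \<rho> = Inf {(\<Sum>P\<in>F. \<bar>q P\<bar>) | F q.
      finite F \<and> F \<subseteq> stab_projs n \<and>
      \<rho> = msum (2^n) F (\<lambda>P. of_real (q P) \<cdot>\<^sub>m P)}"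

definition stab_mixed :: "nat \<Rightarrow> complex mat set" where
  "stab_mixed n = {msum (2^n) F (\<lambda>P. of_real (p P) \<cdot>\<^sub>m P) | F p.
      finite F \<and> F \<subseteq> stab_projs n \<and> (\<forall>P\<in>F. 0 \<le> p P) \<and> (\<Sum>P\<in>F. p P) = 1}"

definition gen_robustness :: "nat \<Rightarrow> complex mat \<Rightarrow> real" where
  "gen_robustness n \<rho> = Inf {t. \<exists>\<sigma>\<in>stab_mixed n.
      psd (2^n) (of_real t \<cdot>\<^sub>m \<sigma> - \<rho>)}"

end

theory Submission
  imports Defs "HOL-Library.FuncSet"
begin

definition qf :: "nat \<Rightarrow> complex mat \<Rightarrow> complex vec \<Rightarrow> complex" where
  "qf d A v = (\<Sum>i<d. cnj (v $ i) * (A *\<^sub>v v) $ i)"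

lemma qf_expand:
  assumes "A \<in> carrier_mat d d" "v \<in> carrier_vec d"
  shows "qf d A v = (\<Sum>i<d. \<Sum>j<d. cnj (v $ i) * A $$ (i,j) * v $ j)"
  using assms unfolding qf_def
  by (auto simp: scalar_prod_def sum_distrib_left mult.assoc atLeast0LessThan intro!: sum.cong)

lemma psd_qf: "psd d A \<Longrightarrow> v \<in> carrier_vec d \<Longrightarrow> 0 \<le> Re (qf d A v)"
  unfolding psd_def qf_def by auto

lemma psd_carrier: "psd d A \<Longrightarrow> A \<in> carrier_mat d d"
  unfolding psd_def by auto

lemma psd_herm:
  assumes "psd d P" "i < d" "j < d"
  shows "P $$ (j,i) = cnj (P $$ (i,j))"
proof -
  have c: "P \<in> carrier_mat d d" and h: "dagger P = P" using assms(1) unfolding psd_def by auto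
  have "P $$ (j,i) = dagger P $$ (j,i)" using h by simp
  also have "\<dots> = cnj (P $$ (i,j))" using c assms(2,3) unfolding dagger_def by auto
  finally show ?thesis .
qed

lemma psdI:
  assumes "A \<in> carrier_mat d d"
    and "\<And>i j. i < d \<Longrightarrow> j < d \<Longrightarrow> A $$ (j,i) = cnj (A $$ (i,j))"
    and "\<And>v. v \<in> carrier_vec d \<Longrightarrow> 0 \<le> Re (qf d A v)"
  shows "psd d A"
proof -
  have "dagger A = A"
  proof (rule eq_matI)
    fix i j assume ij: "i < dim_row A" "j < dim_col A"
    then have ij': "i < d" "j < d" using assms(1) by auto
    have "dagger A $$ (i,j) = cnj (A $$ (j,i))" using ij' assms(1) unfolding dagger_def by simp
    also have "\<dots> = A $$ (i,j)" using assms(2)[OF ij'(2) ij'(1)] by simp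
    finally show "dagger A $$ (i,j) = A $$ (i,j)" .
  qed (use assms(1) in \<open>auto simp: dagger_def\<close>)
  then show ?thesis using assms unfolding psd_def qf_def by auto
qed

lemma psd_comb:
  assumes fin: "finite G" and A: "A \<in> carrier_mat d d"
    and ent: "\<And>i j. i < d \<Longrightarrow> j < d \<Longrightarrow> A $$ (i,j) = (\<Sum>x\<in>G. of_real (c x) * P x $$ (i,j))"
    and c: "\<And>x. x \<in> G \<Longrightarrow> 0 \<le> c x" and P: "\<And>x. x \<in> G \<Longrightarrow> psd d (P x)"
  shows "psd d A"
proof (rule psdI[OF A])
  fix i j assume ij: "i < d" "j < d"
  show "A $$ (j,i) = cnj (A $$ (i,j))"
  proof -
    have "A $$ (j,i) = (\<Sum>x\<in>G. of_real (c x) * P x $$ (j,i))" using ij ent by simp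
    also have "\<dots> = (\<Sum>x\<in>G. of_real (c x) * cnj (P x $$ (i,j)))"
      by (intro sum.cong refl) (simp only: psd_herm[OF P ij])
    also have "\<dots> = cnj (A $$ (i,j))" using ij ent by (simp add: cnj_sum)
    finally show ?thesis .
  qed
next
  fix v :: "complex vec" assume v: "v \<in> carrier_vec d"
  have "qf d A v = (\<Sum>i<d. \<Sum>j<d. cnj (v $ i) * A $$ (i,j) * v $ j)"
    by (rule qf_expand[OF A v])
  also have "\<dots> = (\<Sum>i<d. \<Sum>j<d. \<Sum>x\<in>G. of_real (c x) * (cnj (v $ i) * P x $$ (i,j) * v $ j))"
  proof (intro sum.cong refl)
    fix i j assume "i \<in> {..<d}" "j \<in> {..<d}"
    then show "cnj (v $ i) * A $$ (i, j) * v $ j =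
      (\<Sum>x\<in>G. of_real (c x) * (cnj (v $ i) * P x $$ (i, j) * v $ j))"
    proof -
      have "cnj (v $ i) * A $$ (i, j) * v $ j = cnj (v $ i) * (\<Sum>x\<in>G. of_real (c x) * P x $$ (i,j)) * v $ j"
        using ent \<open>i \<in> {..<d}\<close> \<open>j \<in> {..<d}\<close> by simp
      also have "\<dots> = (\<Sum>x\<in>G. cnj (v $ i) * (of_real (c x) * P x $$ (i,j)) * v $ j)"
        by (simp only: sum_distrib_left sum_distrib_right)
      also have "\<dots> = (\<Sum>x\<in>G. of_real (c x) * (cnj (v $ i) * P x $$ (i, j) * v $ j))"
        by (intro sum.cong refl) (simp only: mult_ac)
      finally show ?thesis .
    qed
  qed
  also have "\<dots> = (\<Sum>x\<in>G. \<Sum>i<d. \<Sum>j<d. of_real (c x) * (cnj (v $ i) * P x $$ (i,j) * v $ j))"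
  proof -
    have "(\<Sum>i<d. \<Sum>j<d. \<Sum>x\<in>G. of_real (c x) * (cnj (v $ i) * P x $$ (i,j) * v $ j))
      = (\<Sum>i<d. \<Sum>x\<in>G. \<Sum>j<d. of_real (c x) * (cnj (v $ i) * P x $$ (i,j) * v $ j))"
      by (intro sum.cong refl sum.swap)
    also have "\<dots> = (\<Sum>x\<in>G. \<Sum>i<d. \<Sum>j<d. of_real (c x) * (cnj (v $ i) * P x $$ (i,j) * v $ j))"
      by (rule sum.swap)
    finally show ?thesis .
  qed
  also have "\<dots> = (\<Sum>x\<in>G. of_real (c x) * qf d (P x) v)"
    by (intro sum.cong refl) (simp add: qf_expand[OF psd_carrier[OF P] v] sum_distrib_left)
  finally have "Re (qf d A v) = (\<Sum>x\<in>G. c x * Re (qf d (P x) v))" by (simp add: Re_sum)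
  also have "\<dots> \<ge> 0" using c psd_qf[OF P v] by (intro sum_nonneg) auto
  finally show "0 \<le> Re (qf d A v)" .
qed

lemma psd_trace:
  assumes "psd d A" shows "0 \<le> Re (mtrace A)"
proof -
  have A: "A \<in> carrier_mat d d" using assms psd_carrier by auto
  have "qf d A (unit_vec d i) = A $$ (i,i)" if "i < d" for i
  proof -
    have u: "unit_vec d i \<in> carrier_vec d" by simp
    have e: "(\<Sum>b<d. cnj (unit_vec d i $ a) * A $$ (a,b) * unit_vec d i $ b)
       = (if a = i then A $$ (i,i) else 0)" if a: "a < d" for a
    proof -
      have "(\<Sum>b<d. cnj (unit_vec d i $ a) * A $$ (a,b) * unit_vec d i $ b)
         = (\<Sum>b<d. if b = i then cnj (unit_vec d i $ a) * A $$ (a,i) else 0)"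
        using \<open>i < d\<close> by (intro sum.cong refl) auto
      also have "\<dots> = cnj (unit_vec d i $ a) * A $$ (a,i)" using \<open>i < d\<close> by (simp add: sum.delta)
      finally show ?thesis using a \<open>i < d\<close> by auto
    qed
    have "qf d A (unit_vec d i) = (\<Sum>a<d. if a = i then A $$ (i,i) else 0)"
      unfolding qf_expand[OF A u] using e by (intro sum.cong refl) auto
    also have "\<dots> = A $$ (i,i)" using \<open>i < d\<close> by (simp add: sum.delta)
    finally show ?thesis .
  qed
  hence "Re (A $$ (i,i)) \<ge> 0" if "i < d" for i
    using psd_qf[OF assms, of "unit_vec d i"] that by auto
  then show ?thesis using A unfolding mtrace_def by (auto simp: Re_sum intro!: sum_nonneg)
qed

lemma outer_carrier: "\<psi> \<in> carrier_vec d \<Longrightarrow> outer \<psi> \<in> carrier_mat d d"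
  unfolding outer_def by auto

lemma outer_psd:
  assumes "\<psi> \<in> carrier_vec d" shows "psd d (outer \<psi>)"
proof (rule psdI[OF outer_carrier[OF assms]])
  fix i j assume "i < d" "j < d"
  then show "outer \<psi> $$ (j, i) = cnj (outer \<psi> $$ (i, j))"
    using assms unfolding outer_def by auto
next
  fix v :: "complex vec" assume v: "v \<in> carrier_vec d"
  define z where "z = (\<Sum>i<d. cnj (v $ i) * \<psi> $ i)"
  have "qf d (outer \<psi>) v = (\<Sum>i<d. \<Sum>j<d. (cnj (v $ i) * \<psi> $ i) * cnj (cnj (v $ j) * \<psi> $ j))"
    unfolding qf_expand[OF outer_carrier[OF assms] v] using assms by (simp add: outer_def mult_ac)
  also have "\<dots> = (\<Sum>i<d. cnj (v$i) * \<psi>$i) * (\<Sum>j<d. cnj (cnj (v $ j) * \<psi> $ j))"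
    by (simp only: sum_product)
  also have "\<dots> = z * cnj z" by (simp only: z_def cnj_sum)
  finally show "0 \<le> Re (qf d (outer \<psi>) v)" by simp
qed

lemma outer_trace:
  assumes "\<psi> \<in> carrier_vec d" "(\<Sum>i<d. (cmod (\<psi> $ i))^2) = 1"
  shows "mtrace (outer \<psi>) = 1"
proof -
  have "mtrace (outer \<psi>) = (\<Sum>i<d. \<psi> $ i * cnj (\<psi> $ i))"
    using assms unfolding mtrace_def outer_def by auto
  also have "\<dots> = (\<Sum>i<d. of_real ((cmod (\<psi> $ i))^2))"
    by (intro sum.cong refl) (metis complex_norm_square of_real_power)
  also have "\<dots> = of_real (\<Sum>i<d. (cmod (\<psi> $ i))^2)" by (simp only: of_real_sum)
  also have "\<dots> = 1" using assms(2) by simp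
  finally show ?thesis .
qed

lemma stab_proj_facts:
  assumes "P \<in> stab_projs n"
  shows "P \<in> carrier_mat (2^n) (2^n)" "psd (2^n) P" "mtrace P = 1"
proof -
  obtain \<psi> where P: "P = outer \<psi>" and s: "stabilizer_state n \<psi>" using assms unfolding stab_projs_def by blast
  have sd: "\<psi> \<in> carrier_vec (2^n) \<and> (\<Sum>i<2^n. (cmod (\<psi> $ i))^2) = 1 \<and> card (stab_group n \<psi>) = 2^n"
    using s unfolding stabilizer_state_def .
  note c = sd[THEN conjunct1] and nm = sd[THEN conjunct2, THEN conjunct1]
  show "P \<in> carrier_mat (2^n) (2^n)" unfolding P by (rule outer_carrier[OF c])
  show "psd (2^n) P" unfolding P by (rule outer_psd[OF c])
  show "mtrace P = 1" unfolding P by (rule outer_trace[OF c nm])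
qed

lemma msum_carrier: "msum d F f \<in> carrier_mat d d"
  unfolding msum_def by simp

lemma msum_dims[simp]: "dim_row (msum d F f) = d" "dim_col (msum d F f) = d"
  unfolding msum_def by simp_all

lemma msum_index: "i < d \<Longrightarrow> j < d \<Longrightarrow> msum d F f $$ (i,j) = (\<Sum>x\<in>F. f x $$ (i,j))"
  unfolding msum_def by simp

lemma msum_smult_index:
  assumes "F \<subseteq> stab_projs n" "i < 2^n" "j < 2^n"
  shows "msum (2^n) F (\<lambda>P. of_real (q P) \<cdot>\<^sub>m P) $$ (i,j) = (\<Sum>P\<in>F. of_real (q P) * P $$ (i,j))"
proof -
  have "(of_real (q P) \<cdot>\<^sub>m P) $$ (i,j) = of_real (q P) * P $$ (i,j)" if "P \<in> F" for P
  proof -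
    have "P \<in> carrier_mat (2^n) (2^n)" using assms(1) stab_proj_facts(1) that by blast
    then show ?thesis using assms(2,3) by (simp add: carrier_matD)
  qed
  then show ?thesis using assms by (simp add: msum_index)
qed

lemma mtrace_msum:
  assumes "F \<subseteq> stab_projs n" "finite F"
  shows "mtrace (msum (2^n) F (\<lambda>P. of_real (q P) \<cdot>\<^sub>m P)) = of_real (\<Sum>P\<in>F. q P)"
proof -
  have "mtrace (msum (2^n) F (\<lambda>P. of_real (q P) \<cdot>\<^sub>m P)) = (\<Sum>i<2^n. \<Sum>P\<in>F. of_real (q P) * P $$ (i,i))"
  proof -
    have "dim_row (msum (2^n) F (\<lambda>P. of_real (q P) \<cdot>\<^sub>m P)) = 2^n" by (simp add: msum_def)
    then show ?thesis unfolding mtrace_def using msum_smult_index[OF assms(1)] by simp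
  qed
  also have "\<dots> = (\<Sum>P\<in>F. of_real (q P) * (\<Sum>i<2^n. P $$ (i,i)))"
    by (simp add: sum.swap[of _ "{..<2^n}"] sum_distrib_left)
  also have "\<dots> = (\<Sum>P\<in>F. of_real (q P))"
  proof (intro sum.cong refl)
    fix P assume "P \<in> F"
    then have "P \<in> carrier_mat (2^n) (2^n)" "mtrace P = 1" using assms stab_proj_facts by auto
    then show "of_real (q P) * (\<Sum>i<2^n. P $$ (i,i)) = of_real (q P)" unfolding mtrace_def by simp
  qed
  finally show ?thesis by simp
qed

lemma stab_mixed_trace:
  assumes "\<sigma> \<in> stab_mixed n" shows "mtrace \<sigma> = 1" "\<sigma> \<in> carrier_mat (2^n) (2^n)"
proof -
  obtain F p where s: "\<sigma> = msum (2^n) F (\<lambda>P. of_real (p P) \<cdot>\<^sub>m P)" "finite F" "F \<subseteq> stab_projs n"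
    "(\<Sum>P\<in>F. p P) = 1" using assms unfolding stab_mixed_def by blast
  show "mtrace \<sigma> = 1" using mtrace_msum[OF s(3,2), of p] s by simp
  show "\<sigma> \<in> carrier_mat (2^n) (2^n)" using s msum_carrier by simp
qed

lemma density_facts:
  assumes "density n \<rho>" shows "\<rho> \<in> carrier_mat (2^n) (2^n)" "mtrace \<rho> = 1" "psd (2^n) \<rho>"
  using assms psd_carrier unfolding density_def by auto

lemma gen_set_lower:
  assumes "density n \<rho>" "\<sigma> \<in> stab_mixed n" "psd (2^n) (of_real t \<cdot>\<^sub>m \<sigma> - \<rho>)"
  shows "1 \<le> t"
proof -
  have r: "\<rho> \<in> carrier_mat (2^n) (2^n)" "mtrace \<rho> = 1" using density_facts[OF assms(1)] by auto
  have s: "\<sigma> \<in> carrier_mat (2^n) (2^n)" "mtrace \<sigma> = 1" using stab_mixed_trace[OF assms(2)] by auto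
  have "mtrace (of_real t \<cdot>\<^sub>m \<sigma> - \<rho>) = (\<Sum>i<2^n. of_real t * \<sigma> $$ (i,i) - \<rho> $$ (i,i))"
    unfolding mtrace_def using r s by simp
  also have "\<dots> = of_real t * mtrace \<sigma> - mtrace \<rho>"
    unfolding mtrace_def using r s by (simp add: sum_subtractf sum_distrib_left)
  also have "\<dots> = of_real (t - 1)" using r s by simp
  finally show ?thesis using psd_trace[OF assms(3)] by simp
qed

lemma gen_le:
  assumes "density n \<rho>" "\<sigma> \<in> stab_mixed n" "psd (2^n) (of_real t \<cdot>\<^sub>m \<sigma> - \<rho>)"
  shows "gen_robustness n \<rho> \<le> t"
  unfolding gen_robustness_def
proof (rule cInf_lower)
  show "t \<in> {t. \<exists>\<sigma>\<in>stab_mixed n. psd (2 ^ n) (of_real t \<cdot>\<^sub>m \<sigma> - \<rho>)}" using assms by auto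
  show "bdd_below {t. \<exists>\<sigma>\<in>stab_mixed n. psd (2 ^ n) (of_real t \<cdot>\<^sub>m \<sigma> - \<rho>)}"
    using gen_set_lower[OF assms(1)] by (auto intro!: bdd_belowI[of _ 1])
qed

lemma decomp_main:
  assumes dens: "density n \<rho>" and fin: "finite F" and sub: "F \<subseteq> stab_projs n"
    and rho: "\<rho> = msum (2^n) F (\<lambda>P. of_real (q P) \<cdot>\<^sub>m P)"
  shows "(\<Sum>P\<in>F. q P) = 1" "gen_robustness n \<rho> \<le> (\<Sum>P\<in>{P\<in>F. 0 < q P}. q P)"
    "(\<Sum>P\<in>F. \<bar>q P\<bar>) = 2 * (\<Sum>P\<in>{P\<in>F. 0 < q P}. q P) - 1"
proof -
  have "complex_of_real (\<Sum>P\<in>F. q P) = mtrace \<rho>" using mtrace_msum[OF sub fin] rho by simp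
  then have "complex_of_real (\<Sum>P\<in>F. q P) = 1" using density_facts[OF dens] by simp
  then show sq: "(\<Sum>P\<in>F. q P) = 1" by (metis of_real_eq_1_iff)
  define Fp where "Fp = {P\<in>F. 0 < q P}"
  define Fm where "Fm = {P\<in>F. \<not> 0 < q P}"
  define p where "p = (\<Sum>P\<in>Fp. q P)"
  have finp: "finite Fp" "finite Fm" using fin unfolding Fp_def Fm_def by auto
  have split: "(\<Sum>P\<in>F. g P) = (\<Sum>P\<in>Fp. g P) + (\<Sum>P\<in>Fm. g P)" for g :: "complex mat \<Rightarrow> 'a::comm_monoid_add"
  proof -
    have "F = Fp \<union> Fm" "Fp \<inter> Fm = {}" unfolding Fp_def Fm_def by auto
    then show ?thesis using sum.union_disjoint[OF finp] by metis
  qed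
  have "(\<Sum>P\<in>F. \<bar>q P\<bar>) = (\<Sum>P\<in>Fp. q P) + (\<Sum>P\<in>Fm. - q P)"
    unfolding split[of "\<lambda>P. \<bar>q P\<bar>"] Fp_def Fm_def by (intro arg_cong2[where f="(+)"] sum.cong) auto
  also have "(\<Sum>P\<in>Fm. - q P) = p - 1" using sq split[of q] unfolding p_def by (simp add: sum_negf)
  finally show "(\<Sum>P\<in>F. \<bar>q P\<bar>) = 2 * (\<Sum>P\<in>{P\<in>F. 0 < q P}. q P) - 1" unfolding p_def Fp_def by simp
  have qm: "\<forall>P\<in>Fm. 0 \<le> - q P" unfolding Fm_def by auto
  have "(\<Sum>P\<in>Fm. q P) \<le> 0" using qm by (simp add: sum_nonpos)
  then have ppos: "0 < p" using sq split[of q] unfolding p_def by simp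
  define \<sigma> where "\<sigma> = msum (2^n) Fp (\<lambda>P. of_real (q P / p) \<cdot>\<^sub>m P)"
  have subp: "Fp \<subseteq> stab_projs n" using sub unfolding Fp_def by auto
  have "\<sigma> \<in> stab_mixed n"
    unfolding stab_mixed_def
  proof (intro CollectI exI conjI)
    show "\<sigma> = msum (2 ^ n) Fp (\<lambda>P. of_real (q P / p) \<cdot>\<^sub>m P)" by (rule \<sigma>_def)
    show "\<forall>P\<in>Fp. 0 \<le> q P / p" using ppos unfolding Fp_def by auto
    show "(\<Sum>P\<in>Fp. q P / p) = 1" using ppos unfolding p_def by (simp add: sum_divide_distrib[symmetric])
  qed (use finp subp in auto)
  moreover have "psd (2^n) (of_real p \<cdot>\<^sub>m \<sigma> - \<rho>)"
  proof (rule psd_comb[where G=Fm and c="\<lambda>P. - q P" and P="\<lambda>P. P"])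
    show "finite Fm" by (rule finp)
    show "of_real p \<cdot>\<^sub>m \<sigma> - \<rho> \<in> carrier_mat (2 ^ n) (2 ^ n)"
      using density_facts[OF dens] by auto
    show "0 \<le> - q P" if "P \<in> Fm" for P using qm that by auto
    show "psd (2 ^ n) P" if "P \<in> Fm" for P using that sub stab_proj_facts unfolding Fm_def by auto
    fix i j :: nat assume ij: "i < 2^n" "j < 2^n"
    have "(of_real p \<cdot>\<^sub>m \<sigma> - \<rho>) $$ (i,j) = of_real p * \<sigma> $$ (i,j) - \<rho> $$ (i,j)"
      using ij density_facts[OF dens] unfolding \<sigma>_def by (simp add: msum_carrier)
    also have "of_real p * \<sigma> $$ (i,j) = (\<Sum>P\<in>Fp. of_real (q P) * P $$ (i,j))"
      unfolding \<sigma>_def using msum_smult_index[OF subp ij, of "\<lambda>P. q P / p"] ppos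
      by (simp add: sum_distrib_left)
    also have "\<rho> $$ (i,j) = (\<Sum>P\<in>Fp. of_real (q P) * P $$ (i,j)) + (\<Sum>P\<in>Fm. of_real (q P) * P $$ (i,j))"
      unfolding rho using msum_smult_index[OF sub ij, of q] split by simp
    finally show "(of_real p \<cdot>\<^sub>m \<sigma> - \<rho>) $$ (i,j) = (\<Sum>P\<in>Fm. of_real (- q P) * P $$ (i,j))"
      by (simp add: sum_negf)
  qed
  ultimately have "gen_robustness n \<rho> \<le> p" by (rule gen_le[OF dens])
  then show "gen_robustness n \<rho> \<le> (\<Sum>P\<in>{P\<in>F. 0 < q P}. q P)" unfolding p_def Fp_def .
qed

definition hc :: complex where "hc = complex_of_real (sqrt 2 / 2)"

lemma hc_sq: "hc * hc = 1/2"
proof -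
  have "complex_of_real (sqrt 2 / 2) * complex_of_real (sqrt 2 / 2) = complex_of_real (sqrt 2 * sqrt 2 / 4)"
    by (simp only: of_real_mult[symmetric]) simp
  also have "sqrt 2 * sqrt 2 / 4 = (1/2::real)" by simp
  finally show ?thesis unfolding hc_def by simp
qed

lemma ihc: "\<i> * hc * \<i> * hc = -1/2"
proof -
  have "\<i> * hc * \<i> * hc = (\<i> * \<i>) * (hc * hc)" by (simp only: mult_ac)
  then show ?thesis by (simp add: hc_sq)
qed

lemma hc_cnj[simp]: "cnj hc = hc" unfolding hc_def by simp
lemma hc_cmod_sq: "(cmod hc)^2 = 1/2"
  unfolding hc_def by (simp add: power_divide)

definition wv :: "nat \<Rightarrow> nat \<Rightarrow> complex" where
 "wv v b = (if v = 0 then (if b = 0 then 1 else 0)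
   else if v = 1 then (if b = 0 then 0 else 1)
   else if v = 2 then hc
   else if v = 3 then (if b = 0 then hc else \<i> * hc)
   else if v = 4 then (if b = 0 then hc else - hc)
   else (if b = 0 then hc else - \<i> * hc))"

definition wa :: "nat \<Rightarrow> nat" where
  "wa v = (if v \<le> 1 then 3 else if v = 2 \<or> v = 4 then 1 else 2)"

definition we :: "nat \<Rightarrow> real" where
  "we v = (if v = 1 \<or> v = 4 \<or> v = 5 then -1 else 1)"

definition pe :: "nat \<Rightarrow> nat \<Rightarrow> nat \<Rightarrow> complex" where
  "pe k a b = (if k = 0 then (if a = b then 1 else 0)
     else if k = 1 then (if a = b then 0 else 1)
     else if k = 2 then (if a = b then 0 else if a = 0 then - \<i> else \<i>)
     else (if a = b then (if a = 0 then 1 else -1) else 0))"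

lemma pauli1_index: "a < 2 \<Longrightarrow> b < 2 \<Longrightarrow> pauli1 k $$ (a,b) = pe k a b"
  unfolding pauli1_def pe_def mat_of_rows_list_def
  by (cases "a = 0"; cases "b = 0") (auto simp: less_2_cases_iff)

lemma sum2: "(\<Sum>a<2. f a) = f 0 + f (1::nat)"
  by (simp add: numeral_2_eq_2)
lemma sum4: "(\<Sum>a<4. f a) = f 0 + f 1 + f 2 + f (3::nat)"
  by (simp add: numeral_eq_Suc)

lemma lt2: "a < (2::nat) \<longleftrightarrow> a = 0 \<or> a = 1" by auto
lemma lt4: "a < (4::nat) \<longleftrightarrow> a = 0 \<or> a = 1 \<or> a = 2 \<or> a = 3" by auto
lemma lt6: "a < (6::nat) \<longleftrightarrow> a = 0 \<or> a = 1 \<or> a = 2 \<or> a = 3 \<or> a = 4 \<or> a = 5" by auto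

definition pw :: "nat \<Rightarrow> nat \<Rightarrow> nat \<Rightarrow> complex" where
  "pw s v a = (\<Sum>b<2. pauli1 s $$ (a,b) * wv v b)"

lemma pw_eq: "a < 2 \<Longrightarrow> pw s v a = pe s a 0 * wv v 0 + pe s a 1 * wv v 1"
  unfolding pw_def by (simp add: sum2 pauli1_index)

lemma wv_norm: "v < 6 \<Longrightarrow> (\<Sum>a<2. (cmod (wv v a))^2) = 1"
  unfolding lt6 by (auto simp: sum2 wv_def hc_cmod_sq norm_mult)

lemma pw_id: "v < 6 \<Longrightarrow> a < 2 \<Longrightarrow> pw 0 v a = wv v a"
  unfolding lt6 lt2 by (auto simp: pw_eq pe_def wv_def)

lemma pw_stab: "v < 6 \<Longrightarrow> a < 2 \<Longrightarrow> pw (wa v) v a = of_real (we v) * wv v a"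
  unfolding lt6 lt2 by (auto simp: pw_eq pe_def wv_def wa_def we_def)

lemma pw_anti: "v < 6 \<Longrightarrow> s < 4 \<Longrightarrow> s \<noteq> 0 \<Longrightarrow> s \<noteq> wa v \<Longrightarrow>
   (\<Sum>a<2. cnj (wv v a) * pw s v a) = 0"
  unfolding lt6 lt4 by (elim disjE) (simp_all add: sum2 pw_eq pe_def wv_def wa_def hc_sq ihc ring_distribs mult.assoc[symmetric])

lemma pauli_hs: "s < 4 \<Longrightarrow> s' < 4 \<Longrightarrow>
  (\<Sum>a<2. \<Sum>b<2. cnj (pauli1 s $$ (a,b)) * pauli1 s' $$ (a,b)) = (if s = s' then 2 else 0)"
  unfolding lt4 by (auto simp: sum2 pauli1_index pe_def)

definition cc :: "nat \<Rightarrow> nat \<Rightarrow> nat \<Rightarrow> complex" where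
  "cc a b v = (if a = b then (if v = 0 then (if a = 0 then 1 else 0) else if v = 1 then (if a = 0 then 0 else 1) else 0)
     else if a = 0 then (if v \<le> 1 then - (1 + \<i>)/2 else if v = 2 then 1 else \<i>)
     else (if v \<le> 1 then - (1 - \<i>)/2 else if v = 2 then 1 else - \<i>))"

lemma span1: "a < 2 \<Longrightarrow> b < 2 \<Longrightarrow> x < 2 \<Longrightarrow> y < 2 \<Longrightarrow>
  (if x = a \<and> y = b then 1 else 0) = (\<Sum>v<4. cc a b v * (wv v x * cnj (wv v y)))"
  unfolding lt2 by (auto simp: sum4 cc_def wv_def algebra_simps hc_sq) (simp_all add: field_simps)

lemma sum_double_split: fixes m :: nat shows "(\<Sum>j<m+m. F j) = (\<Sum>j<m. F j) + (\<Sum>j<m. F (j+m))"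
proof -
  have e: "{..<m+m} = {..<m} \<union> {m..<m+m}" by auto
  have "(\<Sum>j\<in>{m..<m+m}. F j) = (\<Sum>j\<in>{0+m..<m+m}. F j)" by simp
  also have "\<dots> = (\<Sum>j\<in>{0..<m}. F (j+m))" by (rule sum.shift_bounds_nat_ivl)
  finally show ?thesis unfolding e by (subst sum.union_disjoint) (auto simp: atLeast0LessThan)
qed

lemma bit_low:
  assumes "k < n" shows "((j::nat) + 2^n) div 2^k mod 2 = j div 2^k mod 2"
proof -
  have "(2::nat)^n = 2^k * 2^(n-k)" using assms by (simp add: power_add[symmetric])
  then have "(j + 2^n) div 2^k = j div 2^k + 2^(n-k)" by simp
  moreover have "even ((2::nat)^(n-k))" using assms by simp
  then obtain c where "(2::nat)^(n-k) = 2 * c" by blast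
  ultimately show ?thesis by simp
qed

lemma bit_top0: "(j::nat) < 2^n \<Longrightarrow> j div 2^n mod 2 = 0" by simp
lemma bit_top1: "(j::nat) < 2^n \<Longrightarrow> (j + 2^n) div 2^n mod 2 = 1"
proof -
  assume "j < 2^n"
  then have "(j + 2^n) div 2^n = 1" by (simp add: div_add_self2)
  then show ?thesis by simp
qed

lemma sum_bits_prod:
  fixes g :: "nat \<Rightarrow> nat \<Rightarrow> 'a::comm_semiring_1"
  shows "(\<Sum>j<2^n. \<Prod>k<n. g k (j div 2^k mod 2)) = (\<Prod>k<n. \<Sum>b<2. g k b)"
proof (induction n)
  case 0 then show ?case by simp
next
  case (Suc n)
  have "(\<Sum>j<2^Suc n. \<Prod>k<Suc n. g k (j div 2^k mod 2))
     = (\<Sum>j<2^n. \<Prod>k<Suc n. g k (j div 2^k mod 2)) + (\<Sum>j<2^n. \<Prod>k<Suc n. g k ((j + 2^n) div 2^k mod 2))"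
    using sum_double_split[of "\<lambda>j. \<Prod>k<Suc n. g k (j div 2^k mod 2)" "2^n"] by (simp add: mult_2)
  also have "(\<Sum>j<2^n. \<Prod>k<Suc n. g k (j div 2^k mod 2)) = (\<Sum>j<2^n. (\<Prod>k<n. g k (j div 2^k mod 2)) * g n 0)"
    by (intro sum.cong refl) (simp add: bit_top0)
  also have "(\<Sum>j<2^n. \<Prod>k<Suc n. g k ((j + 2^n) div 2^k mod 2)) = (\<Sum>j<2^n. (\<Prod>k<n. g k (j div 2^k mod 2)) * g n 1)"
  proof (intro sum.cong refl)
    fix j assume "j \<in> {..<(2::nat)^n}"
    then have "(\<Prod>k<n. g k ((j + 2^n) div 2^k mod 2)) = (\<Prod>k<n. g k (j div 2^k mod 2))"
      by (intro prod.cong refl) (simp add: bit_low)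
    then show "(\<Prod>k<Suc n. g k ((j + 2^n) div 2^k mod 2)) = (\<Prod>k<n. g k (j div 2^k mod 2)) * g n 1"
      using \<open>j \<in> {..<2^n}\<close> bit_top1[of j n] by simp
  qed
  finally show ?case using Suc by (simp add: sum_distrib_right[symmetric] sum2 distrib_left)
qed

lemma bits_eq:
  "(i::nat) < 2^n \<Longrightarrow> x < 2^n \<Longrightarrow> (\<And>k. k < n \<Longrightarrow> i div 2^k mod 2 = x div 2^k mod 2) \<Longrightarrow> i = x"
proof (induction n arbitrary: i x)
  case 0 then show ?case by simp
next
  case (Suc n)
  have m: "i mod 2 = x mod 2" using Suc.prems(3)[of 0] by simp
  have "i div 2 = x div 2"
  proof (rule Suc.IH)
    show "i div 2 < 2^n" "x div 2 < 2^n" using Suc.prems(1,2) by auto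
    fix k assume "k < n"
    then show "i div 2 div 2 ^ k mod 2 = x div 2 div 2 ^ k mod 2"
      using Suc.prems(3)[of "Suc k"] by (simp add: div_mult2_eq)
  qed
  then show ?case using m by (metis div_mult_mod_eq)
qed

definition prodst :: "nat \<Rightarrow> (nat \<Rightarrow> nat) \<Rightarrow> complex vec" where
  "prodst n f = vec (2^n) (\<lambda>i. \<Prod>k<n. wv (f k) (i div 2^k mod 2))"

lemma prodst_carrier: "prodst n f \<in> carrier_vec (2^n)"
  unfolding prodst_def by simp

lemma prodst_index: "i < 2^n \<Longrightarrow> prodst n f $ i = (\<Prod>k<n. wv (f k) (i div 2^k mod 2))"
  unfolding prodst_def by simp

lemma pauli_string_index: "i < 2^n \<Longrightarrow> j < 2^n \<Longrightarrow>
   pauli_string n s $$ (i,j) = (\<Prod>k<n. pauli1 (s k) $$ (i div 2^k mod 2, j div 2^k mod 2))"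
  unfolding pauli_string_def by simp

lemma pauli_string_dims[simp]: "dim_row (pauli_string n s) = 2^n" "dim_col (pauli_string n s) = 2^n"
  unfolding pauli_string_def by simp_all

lemma Pmult:
  assumes "i < 2^n"
  shows "(pauli_string n s *\<^sub>v prodst n f) $ i = (\<Prod>k<n. pw (s k) (f k) (i div 2^k mod 2))"
proof -
  have "(pauli_string n s *\<^sub>v prodst n f) $ i = row (pauli_string n s) i \<bullet> prodst n f"
    using assms by simp
  also have "\<dots> = (\<Sum>j<2^n. pauli_string n s $$ (i,j) * prodst n f $ j)"
    unfolding scalar_prod_def using assms by (intro sum.cong) (auto simp: prodst_def)
  also have "\<dots> = (\<Sum>j<2^n. \<Prod>k<n. pauli1 (s k) $$ (i div 2^k mod 2, j div 2^k mod 2) * wv (f k) (j div 2^k mod 2))"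
    using assms by (intro sum.cong refl) (simp add: pauli_string_index prodst_index prod.distrib)
  also have "\<dots> = (\<Prod>k<n. \<Sum>b<2. pauli1 (s k) $$ (i div 2^k mod 2, b) * wv (f k) b)"
    by (rule sum_bits_prod)
  finally show ?thesis unfolding pw_def .
qed

lemma inner_prodst:
  "(\<Sum>i<2^n. cnj (prodst n f $ i) * (pauli_string n s *\<^sub>v prodst n f) $ i)
    = (\<Prod>k<n. \<Sum>a<2. cnj (wv (f k) a) * pw (s k) (f k) a)"
proof -
  have "(\<Sum>i<2^n. cnj (prodst n f $ i) * (pauli_string n s *\<^sub>v prodst n f) $ i)
     = (\<Sum>i<2^n. \<Prod>k<n. cnj (wv (f k) (i div 2^k mod 2)) * pw (s k) (f k) (i div 2^k mod 2))"
  proof (intro sum.cong refl)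
    fix i assume "i \<in> {..<(2::nat)^n}"
    then have i: "i < 2^n" by simp
    show "cnj (prodst n f $ i) * (pauli_string n s *\<^sub>v prodst n f) $ i =
      (\<Prod>k<n. cnj (wv (f k) (i div 2^k mod 2)) * pw (s k) (f k) (i div 2^k mod 2))"
      by (simp only: Pmult[OF i] prodst_index[OF i] cnj_prod prod.distrib)
  qed
  also have "\<dots> = (\<Prod>k<n. \<Sum>a<2. cnj (wv (f k) a) * pw (s k) (f k) a)"
    by (rule sum_bits_prod)
  finally show ?thesis .
qed

lemma prodst_norm:
  assumes "\<And>k. k < n \<Longrightarrow> f k < 6"
  shows "(\<Sum>i<2^n. (cmod (prodst n f $ i))^2) = 1"
proof -
  have "(\<Sum>i<2^n. (cmod (prodst n f $ i))^2) = (\<Sum>i<2^n. \<Prod>k<n. (cmod (wv (f k) (i div 2^k mod 2)))^2)"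
    by (intro sum.cong refl) (simp add: prodst_index prod_norm[symmetric] prod_power_distrib)
  also have "\<dots> = (\<Prod>k<n. \<Sum>a<2. (cmod (wv (f k) a))^2)" by (rule sum_bits_prod)
  also have "\<dots> = 1" using assms wv_norm by (intro prod.neutral) auto
  finally show ?thesis .
qed

lemma prodst_self: 
  assumes "\<And>k. k < n \<Longrightarrow> f k < 6"
  shows "(\<Sum>i<2^n. cnj (prodst n f $ i) * prodst n f $ i) = 1"
proof -
  have "(\<Sum>i<2^n. cnj (prodst n f $ i) * prodst n f $ i) = (\<Sum>i<2^n. of_real ((cmod (prodst n f $ i))^2))"
    by (intro sum.cong refl) (metis complex_norm_square mult.commute)
  also have "\<dots> = of_real (\<Sum>i<2^n. (cmod (prodst n f $ i))^2)" by (simp only: of_real_sum)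
  also have "\<dots> = 1" using prodst_norm[OF assms] by simp
  finally show ?thesis .
qed

lemma smult_mat_vec_index:
  assumes "i < dim_row M" "dim_col M = dim_vec v"
  shows "((a \<cdot>\<^sub>m M) *\<^sub>v v) $ i = a * (M *\<^sub>v v) $ i"
  using assms by (simp add: scalar_prod_def sum_distrib_left mult.assoc)

definition sT :: "(nat \<Rightarrow> nat) \<Rightarrow> nat set \<Rightarrow> nat \<Rightarrow> nat" where
  "sT f T k = (if k \<in> T then wa (f k) else 0)"
definition eT :: "nat \<Rightarrow> (nat \<Rightarrow> nat) \<Rightarrow> nat set \<Rightarrow> real" where
  "eT n f T = (\<Prod>k<n. if k \<in> T then we (f k) else 1)"
definition gT :: "nat \<Rightarrow> (nat \<Rightarrow> nat) \<Rightarrow> nat set \<Rightarrow> complex mat" where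
  "gT n f T = of_real (eT n f T) \<cdot>\<^sub>m pauli_string n (sT f T)"

lemma cnj_mult_self: "cnj z * z = complex_of_real ((cmod z)^2)"
  by (metis complex_norm_square mult.commute)

lemma we_pm: "we v = 1 \<or> we v = -1" unfolding we_def by auto
lemma wa_props: "wa v \<noteq> 0" "wa v < 4" unfolding wa_def by auto

lemma eT_pm: "eT n f T = 1 \<or> eT n f T = -1"
proof (induction n)
  case 0 then show ?case by (simp add: eT_def)
next
  case (Suc n)
  have "eT (Suc n) f T = eT n f T * (if n \<in> T then we (f n) else 1)" unfolding eT_def by simp
  then show ?case using Suc we_pm[of "f n"] by auto
qed

lemma eT_sq: "eT n f T * eT n f T = 1" using eT_pm[of n f T] by auto

lemma stab_apply:
  assumes f: "\<And>k. k < n \<Longrightarrow> f k < 6" and i: "i < 2^n"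
  shows "(pauli_string n (sT f T) *\<^sub>v prodst n f) $ i = of_real (eT n f T) * prodst n f $ i"
proof -
  have "(pauli_string n (sT f T) *\<^sub>v prodst n f) $ i = (\<Prod>k<n. pw (sT f T k) (f k) (i div 2^k mod 2))"
    by (rule Pmult[OF i])
  also have "\<dots> = (\<Prod>k<n. of_real (if k \<in> T then we (f k) else 1) * wv (f k) (i div 2^k mod 2))"
  proof (intro prod.cong refl)
    fix k assume "k \<in> {..<n}"
    then have "f k < 6" using f by auto
    then show "pw (sT f T k) (f k) (i div 2 ^ k mod 2) = of_real (if k \<in> T then we (f k) else 1) * wv (f k) (i div 2 ^ k mod 2)"
      unfolding sT_def using pw_stab pw_id by auto
  qed
  also have "\<dots> = of_real (eT n f T) * prodst n f $ i"
    unfolding eT_def by (simp add: prod.distrib prodst_index[OF i] of_real_prod)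
  finally show ?thesis .
qed

lemma gT_in:
  assumes f: "\<And>k. k < n \<Longrightarrow> f k < 6"
  shows "gT n f T \<in> stab_group n (prodst n f)"
  unfolding stab_group_def
proof (intro CollectI conjI)
  show "gT n f T \<in> signed_paulis n"
  proof -
    have "\<forall>k<n. sT f T k < 4" using wa_props by (simp add: sT_def)
    then show ?thesis unfolding signed_paulis_def gT_def using eT_pm[of n f T] by blast
  qed
  show "gT n f T *\<^sub>v prodst n f = prodst n f"
  proof (rule eq_vecI)
    show "dim_vec (gT n f T *\<^sub>v prodst n f) = dim_vec (prodst n f)"
      unfolding gT_def by (simp add: prodst_def)
    fix i assume "i < dim_vec (prodst n f)"
    then have i: "i < 2^n" by (simp add: prodst_def)
    have "(gT n f T *\<^sub>v prodst n f) $ i = of_real (eT n f T) * (pauli_string n (sT f T) *\<^sub>v prodst n f) $ i"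
      unfolding gT_def using i by (intro smult_mat_vec_index) (auto simp: prodst_def)
    also have "\<dots> = of_real (eT n f T * eT n f T) * prodst n f $ i" using stab_apply[OF f i] by simp
    finally show "(gT n f T *\<^sub>v prodst n f) $ i = prodst n f $ i" by (simp add: eT_sq)
  qed
qed

lemma stab_sub:
  assumes f: "\<And>k. k < n \<Longrightarrow> f k < 6"
  shows "stab_group n (prodst n f) \<subseteq> gT n f ` Pow {..<n}"
proof
  fix P assume "P \<in> stab_group n (prodst n f)"
  then have P1: "P \<in> signed_paulis n" and stab: "P *\<^sub>v prodst n f = prodst n f"
    unfolding stab_group_def by simp_all
  from P1 have "\<exists>\<sigma> s. P = of_real \<sigma> \<cdot>\<^sub>m pauli_string n s \<and> (\<sigma> = 1 \<or> \<sigma> = -1) \<and> (\<forall>k<n. s k < 4)"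
    unfolding signed_paulis_def by (simp only: mem_Collect_eq)
  then obtain \<sigma> s where P: "P = of_real \<sigma> \<cdot>\<^sub>m pauli_string n s" and \<sigma>: "\<sigma> = 1 \<or> \<sigma> = -1"
    and s0: "\<forall>k<n. s k < 4" by blast
  have s: "s k < 4" if "k < n" for k using s0 that by blast
  define \<psi> where "\<psi> = prodst n f"
  have Pent: "of_real \<sigma> * (pauli_string n s *\<^sub>v \<psi>) $ i = \<psi> $ i" if "i < 2^n" for i
  proof -
    have "\<psi> $ i = (P *\<^sub>v \<psi>) $ i" using stab unfolding \<psi>_def by simp
    also have "\<dots> = of_real \<sigma> * (pauli_string n s *\<^sub>v \<psi>) $ i"
      unfolding P using that by (intro smult_mat_vec_index) (auto simp: \<psi>_def prodst_def)
    finally show ?thesis by simp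
  qed
  have key: "of_real \<sigma> * (\<Prod>k<n. \<Sum>a<2. cnj (wv (f k) a) * pw (s k) (f k) a) = 1"
  proof -
    have "of_real \<sigma> * (\<Prod>k<n. \<Sum>a<2. cnj (wv (f k) a) * pw (s k) (f k) a)
        = of_real \<sigma> * (\<Sum>i<2^n. cnj (\<psi> $ i) * (pauli_string n s *\<^sub>v \<psi>) $ i)"
      unfolding \<psi>_def by (simp only: inner_prodst)
    also have "\<dots> = (\<Sum>i<2^n. cnj (\<psi> $ i) * (of_real \<sigma> * (pauli_string n s *\<^sub>v \<psi>) $ i))"
      unfolding sum_distrib_left by (intro sum.cong refl) (simp only: mult.left_commute)
    also have "\<dots> = (\<Sum>i<2^n. cnj (\<psi> $ i) * \<psi> $ i)"
    proof (intro sum.cong refl)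
      fix i assume "i \<in> {..<(2::nat)^n}"
      then have i: "i < 2^n" by simp
      show "cnj (\<psi> $ i) * (of_real \<sigma> * (pauli_string n s *\<^sub>v \<psi>) $ i) = cnj (\<psi> $ i) * \<psi> $ i"
        by (simp only: Pent[OF i])
    qed
    also have "\<dots> = 1" unfolding \<psi>_def by (rule prodst_self[OF f])
    finally show ?thesis .
  qed
  have sk: "s k = 0 \<or> s k = wa (f k)" if k: "k < n" for k
  proof (rule ccontr)
    assume "\<not> (s k = 0 \<or> s k = wa (f k))"
    then have "(\<Sum>a<2. cnj (wv (f k) a) * pw (s k) (f k) a) = 0"
      using pw_anti f[OF k] s[OF k] by auto
    then have z: "(\<Prod>k<n. \<Sum>a<2. cnj (wv (f k) a) * pw (s k) (f k) a) = 0"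
      using k by (intro prod_zero) auto
    show False using key by (simp only: z mult_zero_right zero_neq_one)
  qed
  define T where "T = {k. k < n \<and> s k \<noteq> 0}"
  have T: "T \<in> Pow {..<n}" unfolding T_def by auto
  have ps: "pauli_string n s = pauli_string n (sT f T)"
  proof (rule eq_matI)
    fix i j assume "i < dim_row (pauli_string n (sT f T))" "j < dim_col (pauli_string n (sT f T))"
    then have ij: "i < 2^n" "j < 2^n" by simp_all
    have "s k = sT f T k" if "k \<in> {..<n}" for k
      using that sk[of k] wa_props unfolding sT_def T_def by auto
    then show "pauli_string n s $$ (i, j) = pauli_string n (sT f T) $$ (i, j)"
      unfolding pauli_string_index[OF ij] by (intro prod.cong refl) simp
  qed simp_all
  have "(\<Sum>a<2. cnj (wv (f k) a) * pw (s k) (f k) a) = of_real (if k \<in> T then we (f k) else 1)"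
    if k: "k < n" for k
  proof -
    have fk: "f k < 6" using f k by auto
    have n1: "(\<Sum>a<2. cnj (wv (f k) a) * wv (f k) a) = 1"
    proof -
      have "(\<Sum>a<2. cnj (wv (f k) a) * wv (f k) a) = (\<Sum>a<2. of_real ((cmod (wv (f k) a))^2))"
        by (intro sum.cong refl) (simp only: cnj_mult_self)
      also have "\<dots> = of_real (\<Sum>a<2. (cmod (wv (f k) a))^2)" by (simp only: of_real_sum)
      also have "\<dots> = 1" using wv_norm[OF fk] by simp
      finally show ?thesis .
    qed
    show ?thesis
    proof (cases "k \<in> T")
      case True
      then have "s k = wa (f k)" using sk[OF k] unfolding T_def by auto
      then have "(\<Sum>a<2. cnj (wv (f k) a) * pw (s k) (f k) a) = (\<Sum>a<2. of_real (we (f k)) * (cnj (wv (f k) a) * wv (f k) a))"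
        using pw_stab[OF fk] by (intro sum.cong refl) auto
      also have "\<dots> = of_real (we (f k))" using n1 by (simp add: sum_distrib_left[symmetric])
      finally show ?thesis using True by simp
    next
      case False
      then have "s k = 0" using k unfolding T_def by auto
      then have "(\<Sum>a<2. cnj (wv (f k) a) * pw (s k) (f k) a) = (\<Sum>a<2. cnj (wv (f k) a) * wv (f k) a)"
        using pw_id[OF fk] by (intro sum.cong refl) auto
      then show ?thesis using n1 False by simp
    qed
  qed
  then have "(\<Prod>k<n. \<Sum>a<2. cnj (wv (f k) a) * pw (s k) (f k) a) = of_real (eT n f T)"
    unfolding eT_def of_real_prod by (intro prod.cong refl) auto
  then have "complex_of_real \<sigma> * complex_of_real (eT n f T) = 1" using key by simp
  then have "complex_of_real (\<sigma> * eT n f T) = 1" by (simp only: of_real_mult)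
  then have "\<sigma> * eT n f T = 1" by (simp only: of_real_eq_1_iff)
  then have "\<sigma> = eT n f T" using \<sigma> eT_pm[of n f T] by auto
  then have "P = gT n f T" unfolding P gT_def ps by simp
  then show "P \<in> gT n f ` Pow {..<n}" using T by blast
qed

lemma hs_pauli:
  assumes "\<And>k. k < n \<Longrightarrow> s k < 4" "\<And>k. k < n \<Longrightarrow> s' k < 4"
  shows "(\<Sum>i<2^n. \<Sum>j<2^n. cnj (pauli_string n s $$ (i,j)) * pauli_string n s' $$ (i,j))
     = (\<Prod>k<n. if s k = s' k then 2 else 0)"
proof -
  define h where "h k a b = cnj (pauli1 (s k) $$ (a,b)) * pauli1 (s' k) $$ (a,b)" for k a b
  have "(\<Sum>i<2^n. \<Sum>j<2^n. cnj (pauli_string n s $$ (i,j)) * pauli_string n s' $$ (i,j))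
     = (\<Sum>i<2^n. \<Sum>j<2^n. \<Prod>k<n. h k (i div 2^k mod 2) (j div 2^k mod 2))"
    unfolding h_def by (intro sum.cong refl) (simp add: pauli_string_index prod.distrib)
  also have "\<dots> = (\<Sum>i<2^n. \<Prod>k<n. \<Sum>b<2. h k (i div 2^k mod 2) b)"
    by (intro sum.cong refl) (rule sum_bits_prod)
  also have "\<dots> = (\<Prod>k<n. \<Sum>a<2. \<Sum>b<2. h k a b)"
    by (rule sum_bits_prod)
  also have "\<dots> = (\<Prod>k<n. if s k = s' k then 2 else 0)"
    unfolding h_def using assms pauli_hs by (intro prod.cong refl) auto
  finally show ?thesis .
qed

lemma gT_neq:
  assumes k: "k < n" "k \<in> T1" "k \<notin> T2"
  shows "gT n f T1 \<noteq> gT n f T2"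
proof
  assume eq: "gT n f T1 = gT n f T2"
  define H where "H M = (\<Sum>i<2^n. \<Sum>j<2^n. cnj (pauli_string n (sT f T1) $$ (i,j)) * M $$ (i,j))" for M
  have Hg: "H (gT n f T) = of_real (eT n f T) * (\<Prod>k<n. if sT f T1 k = sT f T k then 2 else 0)" for T
  proof -
    have "H (gT n f T) = of_real (eT n f T) * (\<Sum>i<2^n. \<Sum>j<2^n. cnj (pauli_string n (sT f T1) $$ (i,j)) * pauli_string n (sT f T) $$ (i,j))"
    proof -
      have "H (gT n f T) = (\<Sum>i<2^n. \<Sum>j<2^n. of_real (eT n f T) * (cnj (pauli_string n (sT f T1) $$ (i,j)) * pauli_string n (sT f T) $$ (i,j)))"
        unfolding H_def gT_def by (intro sum.cong refl) (simp add: mult.left_commute)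
      then show ?thesis by (simp only: sum_distrib_left)
    qed
    also have "\<dots> = of_real (eT n f T) * (\<Prod>k<n. if sT f T1 k = sT f T k then 2 else 0)"
      using hs_pauli[of n "sT f T1" "sT f T"] wa_props by (simp add: sT_def)
    finally show ?thesis .
  qed
  have "H (gT n f T1) = of_real (eT n f T1) * 2^n" using Hg[of T1] by simp
  moreover have "H (gT n f T2) = 0"
  proof -
    have "sT f T1 k \<noteq> sT f T2 k" using k wa_props unfolding sT_def by auto
    then have "(\<Prod>k<n. if sT f T1 k = sT f T2 k then (2::complex) else 0) = 0"
      using k(1) by (intro prod_zero) auto
    then show ?thesis using Hg[of T2] by simp
  qed
  ultimately have "of_real (eT n f T1) * (2::complex)^n = 0" using eq by simp
  then show False using eT_pm[of n f T1] by auto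
qed

lemma prodst_stabilizer:
  assumes f: "\<And>k. k < n \<Longrightarrow> f k < 6"
  shows "stabilizer_state n (prodst n f)"
  unfolding stabilizer_state_def
proof (intro conjI)
  show "prodst n f \<in> carrier_vec (2^n)" by (rule prodst_carrier)
  show "(\<Sum>i<2^n. (cmod (prodst n f $ i))^2) = 1" by (rule prodst_norm[OF f])
  have "stab_group n (prodst n f) = gT n f ` Pow {..<n}"
    using stab_sub[of n f] gT_in[of n f] f by blast
  moreover have "inj_on (gT n f) (Pow {..<n})"
  proof (rule inj_onI)
    fix T1 T2 assume T: "T1 \<in> Pow {..<n}" "T2 \<in> Pow {..<n}" and eq: "gT n f T1 = gT n f T2"
    show "T1 = T2"
    proof (rule ccontr)
      assume "T1 \<noteq> T2"
      then obtain k where "k \<in> T1 \<and> k \<notin> T2 \<or> k \<in> T2 \<and> k \<notin> T1" by blast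
      then show False using gT_neq[of k n T1 T2 f] gT_neq[of k n T2 T1 f] T eq by auto
    qed
  qed
  ultimately show "card (stab_group n (prodst n f)) = 2^n"
    by (simp add: card_image card_Pow)
qed

lemma outer_prodst_index:
  assumes "i < 2^n" "j < 2^n"
  shows "outer (prodst n f) $$ (i,j) = (\<Prod>k<n. wv (f k) (i div 2^k mod 2) * cnj (wv (f k) (j div 2^k mod 2)))"
  using assms by (simp add: outer_def prodst_def prod.distrib)

lemma delta_bits:
  fixes i j x y :: nat
  assumes "i < 2^n" "j < 2^n" "x < 2^n" "y < 2^n"
  shows "(if i = x \<and> j = y then 1 else 0 :: complex) =
    (\<Prod>k<n. if i div 2^k mod 2 = x div 2^k mod 2 \<and> j div 2^k mod 2 = y div 2^k mod 2 then 1 else 0)"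
proof (cases "i = x \<and> j = y")
  case True then show ?thesis by simp
next
  case False
  then obtain k where k: "k < n" "\<not> (i div 2^k mod 2 = x div 2^k mod 2 \<and> j div 2^k mod 2 = y div 2^k mod 2)"
    using bits_eq[of i n x] bits_eq[of j n y] assms by blast
  then have "(\<Prod>k<n. if i div 2^k mod 2 = x div 2^k mod 2 \<and> j div 2^k mod 2 = y div 2^k mod 2 then 1 else 0 :: complex) = 0"
    by (intro prod_zero) auto
  then show ?thesis using False by simp
qed

lemma span_entry:
  fixes \<rho> :: "complex mat"
  assumes ij: "i < 2^n" "j < 2^n"
  shows "\<rho> $$ (i,j) = (\<Sum>f\<in>PiE {..<n} (\<lambda>_. {..<4}).
     (\<Sum>x<2^n. \<Sum>y<2^n. \<rho> $$ (x,y) * (\<Prod>k<n. cc (x div 2^k mod 2) (y div 2^k mod 2) (f k))) * outer (prodst n f) $$ (i,j))"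
proof -
  define \<Phi> where "\<Phi> = PiE {..<n} (\<lambda>_. {..<4::nat})"
  have fin: "finite \<Phi>" unfolding \<Phi>_def by (simp add: finite_PiE)
  have e1: "\<rho> $$ (i,j) = (\<Sum>x<2^n. \<Sum>y<2^n. \<rho> $$ (x,y) * (if i = x \<and> j = y then 1 else 0))"
  proof -
    have "(\<Sum>x<2^n. \<Sum>y<2^n. \<rho> $$ (x,y) * (if i = x \<and> j = y then 1 else 0))
       = (\<Sum>x<2^n. if x = i then \<rho> $$ (i,j) else 0)"
    proof (intro sum.cong refl)
      fix x assume "x \<in> {..<(2::nat)^n}"
      have "(\<Sum>y<2^n. \<rho> $$ (x,y) * (if i = x \<and> j = y then 1 else 0)) = (\<Sum>y<2^n. if y = j then (if x = i then \<rho> $$ (i,j) else 0) else 0)"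
        by (intro sum.cong refl) auto
      also have "\<dots> = (if x = i then \<rho> $$ (i,j) else 0)" using ij by (simp add: sum.delta)
      finally show "(\<Sum>y<2^n. \<rho> $$ (x,y) * (if i = x \<and> j = y then 1 else 0)) = (if x = i then \<rho> $$ (i,j) else 0)" .
    qed
    also have "\<dots> = \<rho> $$ (i,j)" using ij by (simp add: sum.delta)
    finally show ?thesis by simp
  qed
  have e2: "(if i = x \<and> j = y then 1 else 0) = (\<Sum>f\<in>\<Phi>. (\<Prod>k<n. cc (x div 2^k mod 2) (y div 2^k mod 2) (f k)) * outer (prodst n f) $$ (i,j))"
    if xy: "x < 2^n" "y < 2^n" for x y
  proof -
    have "(if i = x \<and> j = y then 1 else 0 :: complex) =
      (\<Prod>k<n. if i div 2^k mod 2 = x div 2^k mod 2 \<and> j div 2^k mod 2 = y div 2^k mod 2 then 1 else 0)"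
      by (rule delta_bits[OF ij xy])
    also have "\<dots> = (\<Prod>k<n. \<Sum>v<4. cc (x div 2^k mod 2) (y div 2^k mod 2) v * (wv v (i div 2^k mod 2) * cnj (wv v (j div 2^k mod 2))))"
      by (intro prod.cong refl span1) auto
    also have "\<dots> = (\<Sum>f\<in>\<Phi>. \<Prod>k<n. cc (x div 2^k mod 2) (y div 2^k mod 2) (f k) * (wv (f k) (i div 2^k mod 2) * cnj (wv (f k) (j div 2^k mod 2))))"
      unfolding \<Phi>_def by (rule prod_sum_PiE) auto
    also have "\<dots> = (\<Sum>f\<in>\<Phi>. (\<Prod>k<n. cc (x div 2^k mod 2) (y div 2^k mod 2) (f k)) * outer (prodst n f) $$ (i,j))"
      by (intro sum.cong refl) (simp add: outer_prodst_index[OF ij] prod.distrib)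
    finally show ?thesis .
  qed
  have "\<rho> $$ (i,j) = (\<Sum>x<2^n. \<Sum>y<2^n. \<Sum>f\<in>\<Phi>. \<rho> $$ (x,y) * ((\<Prod>k<n. cc (x div 2^k mod 2) (y div 2^k mod 2) (f k)) * outer (prodst n f) $$ (i,j)))"
    unfolding e1 by (intro sum.cong refl) (simp add: e2 sum_distrib_left)
  also have "\<dots> = (\<Sum>f\<in>\<Phi>. \<Sum>x<2^n. \<Sum>y<2^n. \<rho> $$ (x,y) * ((\<Prod>k<n. cc (x div 2^k mod 2) (y div 2^k mod 2) (f k)) * outer (prodst n f) $$ (i,j)))"
  proof -
    have "(\<Sum>x<2^n. \<Sum>y<2^n. \<Sum>f\<in>\<Phi>. \<rho> $$ (x,y) * ((\<Prod>k<n. cc (x div 2^k mod 2) (y div 2^k mod 2) (f k)) * outer (prodst n f) $$ (i,j)))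
      = (\<Sum>x<2^n. \<Sum>f\<in>\<Phi>. \<Sum>y<2^n. \<rho> $$ (x,y) * ((\<Prod>k<n. cc (x div 2^k mod 2) (y div 2^k mod 2) (f k)) * outer (prodst n f) $$ (i,j)))"
      by (intro sum.cong refl sum.swap)
    also have "\<dots> = (\<Sum>f\<in>\<Phi>. \<Sum>x<2^n. \<Sum>y<2^n. \<rho> $$ (x,y) * ((\<Prod>k<n. cc (x div 2^k mod 2) (y div 2^k mod 2) (f k)) * outer (prodst n f) $$ (i,j)))"
      by (rule sum.swap)
    finally show ?thesis .
  qed
  also have "\<dots> = (\<Sum>f\<in>\<Phi>. (\<Sum>x<2^n. \<Sum>y<2^n. \<rho> $$ (x,y) * (\<Prod>k<n. cc (x div 2^k mod 2) (y div 2^k mod 2) (f k))) * outer (prodst n f) $$ (i,j))"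
    by (intro sum.cong refl) (simp add: sum_distrib_right mult.assoc)
  finally show ?thesis unfolding \<Phi>_def .
qed

lemma robust_decomp:
  assumes "psd (2^n) \<rho>"
  shows "\<exists>F q. finite F \<and> F \<subseteq> stab_projs n \<and> \<rho> = msum (2^n) F (\<lambda>P. of_real (q P) \<cdot>\<^sub>m P)"
proof -
  define \<Phi> where "\<Phi> = PiE {..<n} (\<lambda>_. {..<4::nat})"
  have fin: "finite \<Phi>" unfolding \<Phi>_def by (simp add: finite_PiE)
  define a where "a f = (\<Sum>x<2^n. \<Sum>y<2^n. \<rho> $$ (x,y) * (\<Prod>k<n. cc (x div 2^k mod 2) (y div 2^k mod 2) (f k)))" for f :: "nat \<Rightarrow> nat"
  define Pr where "Pr f = outer (prodst n f)" for f
  have rc: "\<rho> \<in> carrier_mat (2^n) (2^n)" using assms psd_carrier by auto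
  have Prs: "Pr f \<in> stab_projs n" if "f \<in> \<Phi>" for f
  proof -
    have "\<And>k. k < n \<Longrightarrow> f k < 6" using that unfolding \<Phi>_def by (auto simp: PiE_def Pi_def)
    then have "stabilizer_state n (prodst n f)" by (rule prodst_stabilizer)
    then show ?thesis unfolding Pr_def stab_projs_def by blast
  qed
  have herm: "Pr f $$ (j,i) = cnj (Pr f $$ (i,j))" if "i < 2^n" "j < 2^n" for f i j
    using that unfolding Pr_def outer_def by (simp add: prodst_def)
  have A: "\<rho> $$ (i,j) = (\<Sum>f\<in>\<Phi>. a f * Pr f $$ (i,j))" if "i < 2^n" "j < 2^n" for i j
    using span_entry[OF that, of \<rho>] unfolding a_def Pr_def \<Phi>_def .
  have B: "\<rho> $$ (i,j) = (\<Sum>f\<in>\<Phi>. of_real (Re (a f)) * Pr f $$ (i,j))" if ij: "i < 2^n" "j < 2^n" for i j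
  proof -
    have "\<rho> $$ (i,j) = cnj (\<rho> $$ (j,i))" using psd_herm[OF assms ij(2) ij(1)] by simp
    also have "\<dots> = (\<Sum>f\<in>\<Phi>. cnj (a f) * Pr f $$ (i,j))"
      using A[OF ij(2) ij(1)] by (simp add: cnj_sum herm[OF ij])
    finally have c: "\<rho> $$ (i,j) = (\<Sum>f\<in>\<Phi>. cnj (a f) * Pr f $$ (i,j))" .
    have "\<rho> $$ (i,j) = ((\<Sum>f\<in>\<Phi>. a f * Pr f $$ (i,j)) + (\<Sum>f\<in>\<Phi>. cnj (a f) * Pr f $$ (i,j))) / 2"
      using A[OF ij] c by simp
    also have "\<dots> = (\<Sum>f\<in>\<Phi>. ((a f + cnj (a f)) / 2) * Pr f $$ (i,j))"
      by (simp add: sum.distrib[symmetric] sum_divide_distrib ring_distribs)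
    also have "\<dots> = (\<Sum>f\<in>\<Phi>. of_real (Re (a f)) * Pr f $$ (i,j))"
      by (intro sum.cong refl) (simp add: complex_add_cnj)
    finally show ?thesis .
  qed
  define F where "F = Pr ` \<Phi>"
  define q where "q P = (\<Sum>f\<in>{f\<in>\<Phi>. Pr f = P}. Re (a f))" for P
  have sub: "F \<subseteq> stab_projs n" unfolding F_def using Prs by auto
  have "\<rho> = msum (2^n) F (\<lambda>P. of_real (q P) \<cdot>\<^sub>m P)"
  proof (rule eq_matI)
    fix i j assume "i < dim_row (msum (2^n) F (\<lambda>P. of_real (q P) \<cdot>\<^sub>m P))" "j < dim_col (msum (2^n) F (\<lambda>P. of_real (q P) \<cdot>\<^sub>m P))"
    then have ij: "i < 2^n" "j < 2^n" by simp_all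
    have "msum (2^n) F (\<lambda>P. of_real (q P) \<cdot>\<^sub>m P) $$ (i,j) = (\<Sum>P\<in>F. of_real (q P) * P $$ (i,j))"
      by (rule msum_smult_index[OF sub ij])
    also have "\<dots> = (\<Sum>P\<in>Pr ` \<Phi>. \<Sum>f\<in>{f\<in>\<Phi>. Pr f = P}. of_real (Re (a f)) * Pr f $$ (i,j))"
      unfolding F_def q_def by (intro sum.cong refl) (auto simp: sum_distrib_right)
    also have "\<dots> = (\<Sum>f\<in>\<Phi>. of_real (Re (a f)) * Pr f $$ (i,j))"
      by (rule sum.image_gen[OF fin, symmetric])
    also have "\<dots> = \<rho> $$ (i,j)" using B[OF ij] by simp
    finally show "\<rho> $$ (i,j) = msum (2^n) F (\<lambda>P. of_real (q P) \<cdot>\<^sub>m P) $$ (i,j)" by simp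
  qed (use rc in auto)
  moreover have "finite F" unfolding F_def using fin by simp
  ultimately show ?thesis using sub by blast
qed

lemma robustness_ge:
  assumes dens: "density n \<rho>" and b: "\<And>F q. finite F \<Longrightarrow> F \<subseteq> stab_projs n \<Longrightarrow>
      \<rho> = msum (2^n) F (\<lambda>P. of_real (q P) \<cdot>\<^sub>m P) \<Longrightarrow> c \<le> (\<Sum>P\<in>F. \<bar>q P\<bar>)"
  shows "c \<le> robustness n \<rho>"
  unfolding robustness_def
proof (rule cInf_greatest)
  show "{\<Sum>P\<in>F. \<bar>q P\<bar> |F q. finite F \<and> F \<subseteq> stab_projs n \<and> \<rho> = msum (2 ^ n) F (\<lambda>P. complex_of_real (q P) \<cdot>\<^sub>m P)} \<noteq> {}"
    using robust_decomp[of n \<rho>] dens unfolding density_def by blast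
  show "\<And>x. x \<in> {\<Sum>P\<in>F. \<bar>q P\<bar> |F q. finite F \<and> F \<subseteq> stab_projs n \<and> \<rho> = msum (2 ^ n) F (\<lambda>P. complex_of_real (q P) \<cdot>\<^sub>m P)} \<Longrightarrow> c \<le> x"
    using b by blast
qed

lemma part1:
  assumes dens: "density n \<rho>"
  shows "2 * gen_robustness n \<rho> - 1 \<le> robustness n \<rho>"
proof (rule robustness_ge[OF dens])
  fix F q assume "finite F" "F \<subseteq> stab_projs n" "\<rho> = msum (2^n) F (\<lambda>P. of_real (q P) \<cdot>\<^sub>m P)"
  from decomp_main[OF dens this] show "2 * gen_robustness n \<rho> - 1 \<le> (\<Sum>P\<in>F. \<bar>q P\<bar>)" by linarith
qed

lemma psd2I:
  assumes M: "M \<in> carrier_mat 2 2" and h: "M $$ (1,0) = cnj (M $$ (0,1))"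
    and d0: "M $$ (0,0) = of_real \<alpha>" and d1: "M $$ (1,1) = of_real \<beta>"
    and a: "0 \<le> \<alpha>" and b: "0 \<le> \<beta>" and det: "(cmod (M $$ (0,1)))^2 \<le> \<alpha> * \<beta>"
  shows "psd 2 M"
proof (rule psdI[OF M])
  fix i j :: nat assume "i < 2" "j < 2"
  then show "M $$ (j,i) = cnj (M $$ (i,j))" using h d0 d1
    by (auto simp: lt2)
next
  fix v :: "complex vec" assume v: "v \<in> carrier_vec 2"
  define w where "w = M $$ (0,1)"
  define p1 where "p1 = Re (v $ 0)" define p2 where "p2 = Im (v $ 0)"
  define q1 where "q1 = Re (v $ 1)" define q2 where "q2 = Im (v $ 1)"
  define w1 where "w1 = Re w" define w2 where "w2 = Im w"
  have "Re (qf 2 M v) = \<alpha> * (p1^2 + p2^2) + \<beta> * (q1^2 + q2^2) + 2 * (p1 * (w1 * q1 - w2 * q2) + p2 * (w1 * q2 + w2 * q1))"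
    unfolding qf_expand[OF M v] using h d0 d1
    by (simp add: sum2 p1_def p2_def q1_def q2_def w1_def w2_def w_def power2_eq_square algebra_simps)
  moreover have "0 \<le> \<alpha> * (p1^2 + p2^2) + \<beta> * (q1^2 + q2^2) + 2 * (p1 * (w1 * q1 - w2 * q2) + p2 * (w1 * q2 + w2 * q1))"
  proof -
    have dw: "w1^2 + w2^2 \<le> \<alpha> * \<beta>" using det unfolding w1_def w2_def w_def by (simp add: cmod_power2)
    show ?thesis
    proof (cases "\<alpha> = 0")
      case True
      then have "w1^2 + w2^2 \<le> 0" using dw by simp
      then have "w1^2 + w2^2 = 0" by (smt (verit) zero_le_power2)
      then have "w1 = 0 \<and> w2 = 0" by (simp add: sum_power2_eq_zero_iff)
      then have "w1 = 0" "w2 = 0" by simp_all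
      then show ?thesis using True b by simp
    next
      case False
      then have ap: "0 < \<alpha>" using a by simp
      have id: "\<alpha> * (\<alpha> * (p1^2 + p2^2) + \<beta> * (q1^2 + q2^2) + 2 * (p1 * (w1 * q1 - w2 * q2) + p2 * (w1 * q2 + w2 * q1)))
        = (\<alpha> * p1 + (w1 * q1 - w2 * q2))^2 + (\<alpha> * p2 + (w1 * q2 + w2 * q1))^2 + (\<alpha> * \<beta> - (w1^2 + w2^2)) * (q1^2 + q2^2)"
        by (simp add: power2_eq_square algebra_simps)
      have "0 \<le> (\<alpha> * p1 + (w1 * q1 - w2 * q2))^2 + (\<alpha> * p2 + (w1 * q2 + w2 * q1))^2 + (\<alpha> * \<beta> - (w1^2 + w2^2)) * (q1^2 + q2^2)"
        using dw by (intro add_nonneg_nonneg mult_nonneg_nonneg) auto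
      then have "0 \<le> \<alpha> * (\<alpha> * (p1^2 + p2^2) + \<beta> * (q1^2 + q2^2) + 2 * (p1 * (w1 * q1 - w2 * q2) + p2 * (w1 * q2 + w2 * q1)))"
        using id by simp
      then show ?thesis using ap by (simp add: zero_le_mult_iff)
    qed
  qed
  ultimately show "0 \<le> Re (qf 2 M v)" by simp
qed

definition bm :: "real \<Rightarrow> real \<Rightarrow> real \<Rightarrow> real \<Rightarrow> complex mat" where
  "bm a x y z = mat 2 2 (\<lambda>(i,j). if i = 0 \<and> j = 0 then of_real ((a+z)/2)
      else if i = 0 then of_real (x/2) - \<i> * of_real (y/2)
      else if j = 0 then of_real (x/2) + \<i> * of_real (y/2)
      else of_real ((a-z)/2))"

lemma bm_carrier: "bm a x y z \<in> carrier_mat 2 2" unfolding bm_def by simp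

lemma bm_index:
  "bm a x y z $$ (0,0) = of_real ((a+z)/2)"
  "bm a x y z $$ (0,1) = of_real (x/2) - \<i> * of_real (y/2)"
  "bm a x y z $$ (1,0) = of_real (x/2) + \<i> * of_real (y/2)"
  "bm a x y z $$ (1,1) = of_real ((a-z)/2)"
  unfolding bm_def by simp_all

lemma bm_index':
  "bm a x y z $$ (0,Suc 0) = of_real (x/2) - \<i> * of_real (y/2)"
  "bm a x y z $$ (Suc 0,0) = of_real (x/2) + \<i> * of_real (y/2)"
  "bm a x y z $$ (Suc 0,Suc 0) = of_real ((a-z)/2)"
  unfolding bm_def by simp_all

lemma bm_psd:
  assumes "0 \<le> a" "x^2 + y^2 + z^2 \<le> a^2"
  shows "psd 2 (bm a x y z)"
proof (rule psd2I[OF bm_carrier])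
  show "bm a x y z $$ (1, 0) = cnj (bm a x y z $$ (0, 1))" by (simp add: bm_index bm_index')
  show "bm a x y z $$ (0,0) = of_real ((a+z)/2)" "bm a x y z $$ (1,1) = of_real ((a-z)/2)" by (simp_all add: bm_index bm_index')
  have "z^2 \<le> a^2" using assms(2) by (smt (verit) zero_le_power2)
  then have "\<bar>z\<bar> \<le> a" using assms(1) by (metis abs_le_square_iff abs_of_nonneg)
  then show "0 \<le> (a+z)/2" "0 \<le> (a-z)/2" by auto
  have "(cmod (bm a x y z $$ (0,1)))^2 = (x/2)^2 + (y/2)^2" by (simp add: bm_index bm_index' cmod_power2)
  also have "\<dots> \<le> (a+z)/2 * ((a-z)/2)" using assms(2) by (simp add: power2_eq_square field_simps)
  finally show "(cmod (bm a x y z $$ (0,1)))^2 \<le> (a+z)/2 * ((a-z)/2)" .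
qed

lemma bm_eq: "M \<in> carrier_mat 2 2 \<Longrightarrow> M $$ (0,0) = bm a x y z $$ (0,0) \<Longrightarrow> M $$ (0,1) = bm a x y z $$ (0,1)
  \<Longrightarrow> M $$ (1,0) = bm a x y z $$ (1,0) \<Longrightarrow> M $$ (1,1) = bm a x y z $$ (1,1) \<Longrightarrow> M = bm a x y z"
  by (rule eq_matI) (auto simp: bm_def lt2)

lemma bm_lin: "of_real t \<cdot>\<^sub>m bm a x y z - bm a' x' y' z' = bm (t*a - a') (t*x - x') (t*y - y') (t*z - z')"
  by (rule eq_matI) (auto simp: bm_def lt2 algebra_simps diff_divide_distrib add_divide_distrib)

lemma mixed_from_image:
  assumes fin: "finite A" and Ob: "\<And>v. v \<in> A \<Longrightarrow> Ob v \<in> stab_projs n"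
    and w: "\<And>v. v \<in> A \<Longrightarrow> 0 \<le> w v" and sw: "(\<Sum>v\<in>A. w v) = 1"
    and M: "M \<in> carrier_mat (2^n) (2^n)"
    and ent: "\<And>i j. i < 2^n \<Longrightarrow> j < 2^n \<Longrightarrow> M $$ (i,j) = (\<Sum>v\<in>A. of_real (w v) * Ob v $$ (i,j))"
  shows "M \<in> stab_mixed n"
proof -
  define F where "F = Ob ` A"
  define p where "p P = (\<Sum>v\<in>{v\<in>A. Ob v = P}. w v)" for P
  have sub: "F \<subseteq> stab_projs n" unfolding F_def using Ob by auto
  have "M = msum (2^n) F (\<lambda>P. of_real (p P) \<cdot>\<^sub>m P)"
  proof (rule eq_matI)
    fix i j assume "i < dim_row (msum (2^n) F (\<lambda>P. of_real (p P) \<cdot>\<^sub>m P))" "j < dim_col (msum (2^n) F (\<lambda>P. of_real (p P) \<cdot>\<^sub>m P))"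
    then have ij: "i < 2^n" "j < 2^n" by simp_all
    have "msum (2^n) F (\<lambda>P. of_real (p P) \<cdot>\<^sub>m P) $$ (i,j) = (\<Sum>P\<in>F. of_real (p P) * P $$ (i,j))"
      by (rule msum_smult_index[OF sub ij])
    also have "\<dots> = (\<Sum>P\<in>Ob ` A. \<Sum>v\<in>{v\<in>A. Ob v = P}. of_real (w v) * Ob v $$ (i,j))"
      unfolding F_def p_def by (intro sum.cong refl) (auto simp: sum_distrib_right)
    also have "\<dots> = (\<Sum>v\<in>A. of_real (w v) * Ob v $$ (i,j))"
      by (rule sum.image_gen[OF fin, symmetric])
    finally show "M $$ (i,j) = msum (2^n) F (\<lambda>P. of_real (p P) \<cdot>\<^sub>m P) $$ (i,j)" using ent[OF ij] by simp
  qed (use M in auto)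
  moreover have "finite F" unfolding F_def using fin by simp
  moreover have "\<forall>P\<in>F. 0 \<le> p P" unfolding p_def using w by (auto intro: sum_nonneg)
  moreover have "(\<Sum>P\<in>F. p P) = 1" unfolding F_def p_def using sw sum.image_gen[OF fin, of w Ob] by simp
  ultimately show ?thesis unfolding stab_mixed_def using sub by blast
qed

definition O1 :: "nat \<Rightarrow> complex mat" where "O1 v = outer (prodst 1 (\<lambda>_. v))"

lemma O1_proj: "v < 6 \<Longrightarrow> O1 v \<in> stab_projs 1"
  unfolding O1_def stab_projs_def using prodst_stabilizer[of 1 "\<lambda>_. v"] by auto

lemma O1_index: "i < 2 \<Longrightarrow> j < 2 \<Longrightarrow> O1 v $$ (i,j) = wv v i * cnj (wv v j)"
  unfolding O1_def using outer_prodst_index[of i 1 j "\<lambda>_. v"] by simp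

lemma sum6: "(\<Sum>a<6. f a) = f 0 + f 1 + f 2 + f 3 + f 4 + f (5::nat)"
  by (simp add: numeral_eq_Suc)

lemma Im_hc[simp]: "Im hc = 0" unfolding hc_def by simp
lemma Re_hc2: "Re hc * Re hc = 1/2" using hc_sq unfolding hc_def by (simp add: of_real_mult[symmetric] del: of_real_mult)
lemma Re_hc2': "Re hc * (Re hc * c) = c/2" using Re_hc2 by (metis mult.assoc times_divide_eq_left mult_1 mult.commute)

lemma hc_sq_c: "hc * cnj hc = 1/2" using hc_sq by simp

lemma bm_mixed:
  assumes "\<bar>x\<bar> + \<bar>y\<bar> + \<bar>z\<bar> \<le> 1"
  shows "bm 1 x y z \<in> stab_mixed 1"
proof -
  define u where "u = (1 - (\<bar>x\<bar> + \<bar>y\<bar> + \<bar>z\<bar>)) / 6"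
  define w where "w v = (if v = 0 then max z 0 else if v = 1 then max (-z) 0 else if v = 2 then max x 0
     else if v = 3 then max y 0 else if v = 4 then max (-x) 0 else max (-y) 0) + u" for v :: nat
  have u: "0 \<le> u" using assms unfolding u_def by simp
  have w0: "w 0 - w 1 = z" "w 2 - w 4 = x" "w 3 - w 5 = y" unfolding w_def by auto
  have m: "max z 0 + max (-z) 0 = \<bar>z\<bar>" "max x 0 + max (-x) 0 = \<bar>x\<bar>" "max y 0 + max (-y) 0 = \<bar>y\<bar>" by auto
  have "w 0 + w 1 + w 2 + w 3 + w 4 + w 5 = (max z 0 + max (-z) 0) + (max x 0 + max (-x) 0) + (max y 0 + max (-y) 0) + 6 * u"
    unfolding w_def by simp
  then have ws: "w 0 + w 1 + w 2 + w 3 + w 4 + w 5 = 1" unfolding m u_def by (simp add: field_simps)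
  show ?thesis
  proof (rule mixed_from_image[where A="{..<6}" and Ob=O1 and w=w])
    show "\<And>v. v \<in> {..<6} \<Longrightarrow> O1 v \<in> stab_projs 1" using O1_proj by auto
    show "\<And>v. v \<in> {..<6} \<Longrightarrow> 0 \<le> w v" using u unfolding w_def by auto
    show "(\<Sum>v<6. w v) = 1" using ws by (simp add: sum6)
    show "bm 1 x y z \<in> carrier_mat (2^1) (2^1)" using bm_carrier by simp
    fix i j :: nat assume "i < 2^1" "j < 2^1"
    then have ij: "i < 2" "j < 2" by simp_all
    have e: "(\<Sum>v<6. of_real (w v) * O1 v $$ (i,j)) = (\<Sum>v<6. of_real (w v) * (wv v i * cnj (wv v j)))"
      using ij by (intro sum.cong refl) (simp add: O1_index)
    show "bm 1 x y z $$ (i,j) = (\<Sum>v<6. of_real (w v) * O1 v $$ (i,j))"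
      unfolding e using ij w0 ws
      by (auto simp: lt2 sum6 bm_index bm_index' wv_def hc_sq_c complex_eq_iff field_simps Re_hc2 Re_hc2')
  qed simp
qed

lemma elem_eq1:
  assumes c: "\<psi> \<in> carrier_vec 2" and i: "i < 2"
  shows "((of_real \<sigma> \<cdot>\<^sub>m pauli_string 1 s) *\<^sub>v \<psi>) $ i = of_real \<sigma> * (pe (s 0) i 0 * \<psi> $ 0 + pe (s 0) i 1 * \<psi> $ 1)"
proof -
  have "((of_real \<sigma> \<cdot>\<^sub>m pauli_string 1 s) *\<^sub>v \<psi>) $ i = of_real \<sigma> * (pauli_string 1 s *\<^sub>v \<psi>) $ i"
    using c i by (intro smult_mat_vec_index) auto
  also have "(pauli_string 1 s *\<^sub>v \<psi>) $ i = row (pauli_string 1 s) i \<bullet> \<psi>" using i by simp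
  also have "\<dots> = (\<Sum>j<2. pauli_string 1 s $$ (i,j) * \<psi> $ j)"
    unfolding scalar_prod_def using c i by (intro sum.cong) auto
  also have "\<dots> = pe (s 0) i 0 * \<psi> $ 0 + pe (s 0) i 1 * \<psi> $ 1"
    using i by (simp add: sum2 pauli_string_index pauli1_index)
  finally show ?thesis .
qed

lemma mult_cnj_self: "z * cnj z = complex_of_real ((cmod z)^2)"
  by (metis complex_norm_square)

lemma stab1_bloch:
  assumes "P \<in> stab_projs 1"
  shows "\<bar>2 * Re (P$$(0,1))\<bar> + \<bar>2 * Im (P$$(0,1))\<bar> + \<bar>Re (P$$(0,0)) - Re (P$$(1,1))\<bar> \<le> 1"
proof -
  obtain \<psi> where P: "P = outer \<psi>" and st: "stabilizer_state 1 \<psi>"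
    using assms unfolding stab_projs_def by blast
  have sd: "\<psi> \<in> carrier_vec (2^1) \<and> (\<Sum>i<2^1. (cmod (\<psi> $ i))^2) = 1 \<and> card (stab_group 1 \<psi>) = 2^1"
    using st unfolding stabilizer_state_def .
  have c: "\<psi> \<in> carrier_vec 2" using sd by simp
  have nm: "(cmod (\<psi> $ 0))^2 + (cmod (\<psi> $ 1))^2 = 1" using sd by (simp add: sum2)
  have card: "card (stab_group 1 \<psi>) = 2" using sd by simp
  define a where "a = \<psi> $ 0"
  define b where "b = \<psi> $ 1"
  have ex: "\<exists>\<sigma> s. (\<sigma> = 1 \<or> \<sigma> = -1) \<and> s 0 < 4 \<and> s 0 \<noteq> 0 \<and>
      of_real \<sigma> * (pe (s 0) 0 0 * a + pe (s 0) 0 1 * b) = a \<and>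
      of_real \<sigma> * (pe (s 0) 1 0 * a + pe (s 0) 1 1 * b) = b"
  proof (rule ccontr)
    assume nex: "\<not> ?thesis"
    define I1 where "I1 = of_real 1 \<cdot>\<^sub>m pauli_string 1 (\<lambda>_. 0)"
    have "stab_group 1 \<psi> \<subseteq> {I1}"
    proof
      fix Q assume "Q \<in> stab_group 1 \<psi>"
      then have Q1: "Q \<in> signed_paulis 1" and stab: "Q *\<^sub>v \<psi> = \<psi>"
        unfolding stab_group_def by simp_all
      from Q1 have "\<exists>\<sigma> s. Q = of_real \<sigma> \<cdot>\<^sub>m pauli_string 1 s \<and> (\<sigma> = 1 \<or> \<sigma> = -1) \<and> (\<forall>k<1. s k < 4)"
        unfolding signed_paulis_def by (simp only: mem_Collect_eq)
      then obtain \<sigma> s where Q: "Q = of_real \<sigma> \<cdot>\<^sub>m pauli_string 1 s" and \<sigma>: "\<sigma> = 1 \<or> \<sigma> = -1"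
        and s: "s 0 < 4" by auto
      have E: "of_real \<sigma> * (pe (s 0) i 0 * a + pe (s 0) i 1 * b) = \<psi> $ i" if "i < 2" for i
        using elem_eq1[OF c that, of \<sigma> s] stab unfolding Q a_def b_def by simp
      have s0: "s 0 = 0" using nex \<sigma> s E[of 0] E[of 1] unfolding a_def b_def by auto
      have "\<sigma> = 1"
      proof (rule ccontr)
        assume "\<sigma> \<noteq> 1"
        then have "\<sigma> = -1" using \<sigma> by simp
        then have "a = 0" "b = 0" using E[of 0] E[of 1] s0 unfolding a_def b_def by (simp_all add: pe_def)
        then show False using nm unfolding a_def b_def by simp
      qed
      moreover have "pauli_string 1 s = pauli_string 1 (\<lambda>_. 0)"
        unfolding pauli_string_def using s0 by (intro cong[OF refl, where f="mat (2^1) (2^1)"]) auto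
      ultimately show "Q \<in> {I1}" unfolding Q I1_def by simp
    qed
    then have "card (stab_group 1 \<psi>) \<le> 1" using card_mono[of "{I1}"] by simp
    then show False using card by simp
  qed
  then obtain \<sigma> s where \<sigma>: "\<sigma> = 1 \<or> \<sigma> = -1" and s: "s 0 < 4" "s 0 \<noteq> 0"
    and E0: "of_real \<sigma> * (pe (s 0) 0 0 * a + pe (s 0) 0 1 * b) = a"
    and E1: "of_real \<sigma> * (pe (s 0) 1 0 * a + pe (s 0) 1 1 * b) = b" by blast
  have Pe: "P$$(0,1) = a * cnj b" "P$$(0,0) = a * cnj a" "P$$(1,1) = b * cnj b"
    unfolding P a_def b_def outer_def using c by simp_all
  have nm': "(cmod a)^2 + (cmod b)^2 = 1" using nm unfolding a_def b_def .
  have "s 0 = 1 \<or> s 0 = 2 \<or> s 0 = 3" using s by auto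
  then show ?thesis
  proof (elim disjE)
    assume s1: "s 0 = 1"
    then have ab: "a = of_real \<sigma> * b" using E0 by (simp add: pe_def)
    have ca: "cmod a = cmod b" using \<sigma> ab by (auto simp: norm_mult)
    then have cb: "(cmod b)^2 = 1/2" using nm' by simp
    have bb: "b * cnj b = 1/2" unfolding mult_cnj_self cb by simp
    have "a * cnj b = of_real \<sigma> * (b * cnj b)" unfolding ab by (simp add: mult.assoc)
    also have "\<dots> = of_real (\<sigma> / 2)" by (simp only: bb) simp
    finally have "a * cnj b = of_real (\<sigma> / 2)" .
    then have r: "P$$(0,1) = of_real (\<sigma> / 2)" using Pe(1) by simp
    have d: "Re (P$$(0,0)) - Re (P$$(1,1)) = 0" unfolding Pe(2,3) using ca by (simp add: mult_cnj_self)
    show ?thesis unfolding r d using \<sigma> by auto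
  next
    assume s1: "s 0 = 2"
    then have ab: "a = - \<i> * of_real \<sigma> * b" using E0 by (simp add: pe_def algebra_simps)
    have ca: "cmod a = cmod b" using \<sigma> ab by (auto simp: norm_mult)
    then have cb: "(cmod b)^2 = 1/2" using nm' by simp
    have bb: "b * cnj b = 1/2" unfolding mult_cnj_self cb by simp
    have "a * cnj b = - \<i> * of_real \<sigma> * (b * cnj b)" unfolding ab by (simp add: mult.assoc)
    also have "\<dots> = - \<i> * of_real (\<sigma> / 2)" by (simp only: bb) simp
    finally have "a * cnj b = - \<i> * of_real (\<sigma> / 2)" .
    then have r: "P$$(0,1) = - \<i> * of_real (\<sigma> / 2)" using Pe(1) by simp
    have d: "Re (P$$(0,0)) - Re (P$$(1,1)) = 0" unfolding Pe(2,3) using ca by (simp add: mult_cnj_self)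
    show ?thesis unfolding r d using \<sigma> by auto
  next
    assume s1: "s 0 = 3"
    show ?thesis
    proof (cases "\<sigma> = 1")
      case True
      then have "b = 0" using E1 s1 by (simp add: pe_def)
      then show ?thesis using Pe nm' by (simp add: mult_cnj_self)
    next
      case False
      then have "\<sigma> = -1" using \<sigma> by simp
      then have "a = 0" using E0 s1 by (simp add: pe_def)
      then show ?thesis using Pe nm' by (simp add: mult_cnj_self)
    qed
  qed
qed

lemma abs_shrink:
  fixes r k :: real
  assumes "0 \<le> k" "k \<le> \<bar>r\<bar>"
  shows "\<bar>r - k * sgn r\<bar> = \<bar>r\<bar> - k"
  using assms by (cases "r > 0"; cases "r < 0") (auto simp: sgn_if)

lemma octa:
  fixes r1 r2 r3 s :: real
  assumes a1: "\<bar>r1\<bar> \<le> 1" and a2: "\<bar>r2\<bar> \<le> 1" and a3: "\<bar>r3\<bar> \<le> \<bar>r1\<bar>" and a4: "\<bar>r3\<bar> \<le> \<bar>r2\<bar>"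
    and s1: "1 < s" and sdef: "s = \<bar>r1\<bar> + \<bar>r2\<bar> + \<bar>r3\<bar>"
  shows "\<exists>b1 b2 b3. \<bar>b1\<bar> + \<bar>b2\<bar> + \<bar>b3\<bar> \<le> 1 \<and>
     ((s + sqrt 2)/(1 + sqrt 2) * b1 - r1)^2 + ((s + sqrt 2)/(1 + sqrt 2) * b2 - r2)^2
       + ((s + sqrt 2)/(1 + sqrt 2) * b3 - r3)^2 \<le> ((s + sqrt 2)/(1 + sqrt 2) - 1)^2"
proof -
  define t where "t = sqrt (2::real)"
  have t: "t * t = 2" "0 < t" unfolding t_def by simp_all
  define l where "l = (s + t)/(1 + t)"
  define k where "k = (s - 1)/(t + 2)"
  have lpos: "0 < l" unfolding l_def using t s1 by simp
  have l1: "l - 1 = (s - 1)/(1 + t)" unfolding l_def using t by (simp add: field_simps)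
  have kpos: "0 \<le> k" unfolding k_def using t s1 by simp
  have ck: "(l - 1)^2 = 2 * k^2"
  proof -
    have "(t + 2)^2 = 2 * (1 + t)^2" using t by (simp add: power2_eq_square algebra_simps)
    then show ?thesis unfolding l1 k_def using t
      by (simp add: power_divide field_simps)
  qed
  have tt: "t * (t * x) = 2 * x" for x using t by (metis mult.assoc)
  have sk: "s - 2 * k = l"
  proof -
    have "(s - 2 * k) * ((1 + t) * (t + 2)) = l * ((1 + t) * (t + 2))"
      unfolding k_def l_def using t by (simp add: field_simps power2_eq_square algebra_simps) (simp add: tt)
    then show ?thesis using t by simp
  qed
  have kh: "k \<le> (s - 1) / 2" unfolding k_def using t s1 by (intro divide_left_mono) auto
  have "s - 1 \<le> 2 * \<bar>r1\<bar>" using sdef a2 a3 by linarith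
  then have r1k: "k \<le> \<bar>r1\<bar>" using kh by (simp add: field_simps)
  have "s - 1 \<le> 2 * \<bar>r2\<bar>" using sdef a1 a4 by linarith
  then have r2k: "k \<le> \<bar>r2\<bar>" using kh by (simp add: field_simps)
  define b1 where "b1 = (r1 - k * sgn r1) / l"
  define b2 where "b2 = (r2 - k * sgn r2) / l"
  define b3 where "b3 = r3 / l"
  have "\<bar>b1\<bar> + \<bar>b2\<bar> + \<bar>b3\<bar> = (\<bar>r1\<bar> - k + (\<bar>r2\<bar> - k) + \<bar>r3\<bar>) / l"
    unfolding b1_def b2_def b3_def using lpos abs_shrink[OF kpos r1k] abs_shrink[OF kpos r2k]
    by (simp add: field_simps)
  also have "\<dots> = 1" using sk sdef lpos by simp
  finally have bsum: "\<bar>b1\<bar> + \<bar>b2\<bar> + \<bar>b3\<bar> \<le> 1" by simp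
  have e1: "l * b1 - r1 = - k * sgn r1" unfolding b1_def using lpos by simp
  have e2: "l * b2 - r2 = - k * sgn r2" unfolding b2_def using lpos by simp
  have e3: "l * b3 - r3 = 0" unfolding b3_def using lpos by simp
  have sg: "(sgn x)^2 \<le> (1::real)" for x by (cases "x > 0"; cases "x < 0") (auto simp: sgn_if)
  have "(l * b1 - r1)^2 + (l * b2 - r2)^2 + (l * b3 - r3)^2 = k^2 * ((sgn r1)^2 + (sgn r2)^2)"
    unfolding e1 e2 e3 by (simp add: power_mult_distrib algebra_simps)
  also have "\<dots> \<le> k^2 * 2" using sg[of r1] sg[of r2] by (intro mult_left_mono) auto
  also have "\<dots> = (l - 1)^2" using ck by simp
  finally show ?thesis using bsum unfolding l_def t_def by blast
qed

lemma octa_sym: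
  fixes r1 r2 r3 s :: real
  assumes a: "\<bar>r1\<bar> \<le> 1" "\<bar>r2\<bar> \<le> 1" "\<bar>r3\<bar> \<le> 1"
    and s1: "1 < s" and sdef: "s = \<bar>r1\<bar> + \<bar>r2\<bar> + \<bar>r3\<bar>"
  shows "\<exists>b1 b2 b3. \<bar>b1\<bar> + \<bar>b2\<bar> + \<bar>b3\<bar> \<le> 1 \<and>
     ((s + sqrt 2)/(1 + sqrt 2) * b1 - r1)^2 + ((s + sqrt 2)/(1 + sqrt 2) * b2 - r2)^2
       + ((s + sqrt 2)/(1 + sqrt 2) * b3 - r3)^2 \<le> ((s + sqrt 2)/(1 + sqrt 2) - 1)^2"
proof -
  consider "\<bar>r3\<bar> \<le> \<bar>r1\<bar> \<and> \<bar>r3\<bar> \<le> \<bar>r2\<bar>" | "\<bar>r1\<bar> \<le> \<bar>r2\<bar> \<and> \<bar>r1\<bar> \<le> \<bar>r3\<bar>" | "\<bar>r2\<bar> \<le> \<bar>r1\<bar> \<and> \<bar>r2\<bar> \<le> \<bar>r3\<bar>"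
    by linarith
  then show ?thesis
  proof cases
    case 1 then show ?thesis using octa[of r1 r2 r3 s] a s1 sdef by blast
  next
    case 2
    then obtain b2 b3 b1 where "\<bar>b2\<bar> + \<bar>b3\<bar> + \<bar>b1\<bar> \<le> 1 \<and>
     ((s + sqrt 2)/(1 + sqrt 2) * b2 - r2)^2 + ((s + sqrt 2)/(1 + sqrt 2) * b3 - r3)^2
       + ((s + sqrt 2)/(1 + sqrt 2) * b1 - r1)^2 \<le> ((s + sqrt 2)/(1 + sqrt 2) - 1)^2"
      using octa[of r2 r3 r1 s] a s1 sdef by auto
    then show ?thesis by (intro exI[of _ b1] exI[of _ b2] exI[of _ b3]) auto
  next
    case 3
    then obtain b1 b3 b2 where "\<bar>b1\<bar> + \<bar>b3\<bar> + \<bar>b2\<bar> \<le> 1 \<and>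
     ((s + sqrt 2)/(1 + sqrt 2) * b1 - r1)^2 + ((s + sqrt 2)/(1 + sqrt 2) * b3 - r3)^2
       + ((s + sqrt 2)/(1 + sqrt 2) * b2 - r2)^2 \<le> ((s + sqrt 2)/(1 + sqrt 2) - 1)^2"
      using octa[of r1 r3 r2 s] a s1 sdef by auto
    then show ?thesis by (intro exI[of _ b1] exI[of _ b2] exI[of _ b3]) auto
  qed
qed

lemma bm_qf1:
  "Re (qf 2 (bm a x y z) (vec 2 (\<lambda>i. if i = 0 then 1 else c))) =
     (a+z)/2 + (a-z)/2 * ((Re c)^2 + (Im c)^2) + x * Re c + y * Im c"
  by (simp add: qf_expand[OF bm_carrier] sum2 bm_index bm_index' power2_eq_square algebra_simps) (simp add: field_simps)

lemma bm_qf0: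
  "Re (qf 2 (bm a x y z) (vec 2 (\<lambda>i. if i = 0 then 0 else 1))) = (a-z)/2"
  by (simp add: qf_expand[OF bm_carrier] sum2 bm_index bm_index')

lemma part2:
  assumes dens: "density 1 \<rho>"
  shows "(1 + sqrt 2) * gen_robustness 1 \<rho> - sqrt 2 \<le> robustness 1 \<rho>"
proof (rule robustness_ge[OF dens])
  fix F q assume fin: "finite F" and sub: "F \<subseteq> stab_projs 1"
    and rho: "\<rho> = msum (2^1) F (\<lambda>P. of_real (q P) \<cdot>\<^sub>m P)"
  define R where "R = (\<Sum>P\<in>F. \<bar>q P\<bar>)"
  have sq: "(\<Sum>P\<in>F. q P) = 1" using decomp_main(1)[OF dens fin sub rho] .
  have R1: "1 \<le> R" unfolding R_def using sq sum_mono[of F q "\<lambda>P. \<bar>q P\<bar>"] by auto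
  have rc: "\<rho> \<in> carrier_mat 2 2" and psdr: "psd 2 \<rho>" and trr: "mtrace \<rho> = 1"
    using density_facts[OF dens] by simp_all
  have tr: "\<rho> $$ (0,0) + \<rho> $$ (1,1) = 1" using trr rc unfolding mtrace_def by (simp add: sum2)
  have h10: "\<rho> $$ (1,0) = cnj (\<rho> $$ (0,1))" using psd_herm[OF psdr, of 0 1] by simp
  have h00: "Im (\<rho> $$ (0,0)) = 0" using psd_herm[OF psdr, of 0 0] by (simp add: complex_eq_iff)
  have h11: "Im (\<rho> $$ (1,1)) = 0" using psd_herm[OF psdr, of 1 1] by (simp add: complex_eq_iff)
  define r1 where "r1 = 2 * Re (\<rho> $$ (0,1))"
  define r2 where "r2 = - 2 * Im (\<rho> $$ (0,1))"
  define r3 where "r3 = Re (\<rho> $$ (0,0)) - Re (\<rho> $$ (1,1))"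
  have trR: "Re (\<rho> $$ (0,0)) + Re (\<rho> $$ (1,1)) = 1" using arg_cong[OF tr, of Re] by simp
  have rb: "\<rho> = bm 1 r1 r2 r3"
  proof (rule bm_eq[OF rc])
    show "\<rho> $$ (0,0) = bm 1 r1 r2 r3 $$ (0,0)" using h00 trR unfolding r3_def
      by (simp add: bm_index bm_index' complex_eq_iff field_simps)
    show "\<rho> $$ (1,1) = bm 1 r1 r2 r3 $$ (1,1)" using h11 trR unfolding r3_def
      by (simp add: bm_index bm_index' complex_eq_iff field_simps)
    show "\<rho> $$ (0,1) = bm 1 r1 r2 r3 $$ (0,1)" unfolding r1_def r2_def
      by (simp add: bm_index bm_index' complex_eq_iff)
    show "\<rho> $$ (1,0) = bm 1 r1 r2 r3 $$ (1,0)" unfolding r1_def r2_def h10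
      by (simp add: bm_index bm_index' complex_eq_iff)
  qed
  have ent: "\<rho> $$ (i,j) = (\<Sum>P\<in>F. of_real (q P) * P $$ (i,j))" if "i < 2" "j < 2" for i j
    using msum_smult_index[OF sub, of i j q] that rho by simp
  have e01: "\<rho> $$ (0,1) = (\<Sum>P\<in>F. of_real (q P) * P $$ (0,1))" using ent[of 0 1] by simp
  have e00: "\<rho> $$ (0,0) = (\<Sum>P\<in>F. of_real (q P) * P $$ (0,0))" using ent[of 0 0] by simp
  have e11: "\<rho> $$ (1,1) = (\<Sum>P\<in>F. of_real (q P) * P $$ (1,1))" using ent[of 1 1] by simp
  have rs1: "r1 = (\<Sum>P\<in>F. q P * (2 * Re (P $$ (0,1))))"
    unfolding r1_def e01 by (simp add: Re_sum sum_distrib_left mult_ac)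
  have rs2: "r2 = (\<Sum>P\<in>F. q P * (- 2 * Im (P $$ (0,1))))"
    unfolding r2_def e01 by (simp add: Im_sum sum_distrib_left mult_ac)
  have rs3: "r3 = (\<Sum>P\<in>F. q P * (Re (P $$ (0,0)) - Re (P $$ (1,1))))"
    unfolding r3_def e00 e11
    by (simp add: Re_sum sum_subtractf[symmetric] right_diff_distrib)
  define s where "s = \<bar>r1\<bar> + \<bar>r2\<bar> + \<bar>r3\<bar>"
  have sR: "s \<le> R"
  proof -
    have "\<bar>r1\<bar> \<le> (\<Sum>P\<in>F. \<bar>q P\<bar> * \<bar>2 * Re (P $$ (0,1))\<bar>)"
      unfolding rs1 by (rule order_trans[OF sum_abs]) (simp add: abs_mult)
    moreover have "\<bar>r2\<bar> \<le> (\<Sum>P\<in>F. \<bar>q P\<bar> * \<bar>2 * Im (P $$ (0,1))\<bar>)"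
      unfolding rs2 by (rule order_trans[OF sum_abs]) (simp add: abs_mult)
    moreover have "\<bar>r3\<bar> \<le> (\<Sum>P\<in>F. \<bar>q P\<bar> * \<bar>Re (P $$ (0,0)) - Re (P $$ (1,1))\<bar>)"
      unfolding rs3 by (rule order_trans[OF sum_abs]) (simp add: abs_mult)
    moreover have "(\<Sum>P\<in>F. \<bar>q P\<bar> * \<bar>2 * Re (P $$ (0,1))\<bar>) + (\<Sum>P\<in>F. \<bar>q P\<bar> * \<bar>2 * Im (P $$ (0,1))\<bar>)
        + (\<Sum>P\<in>F. \<bar>q P\<bar> * \<bar>Re (P $$ (0,0)) - Re (P $$ (1,1))\<bar>)
        = (\<Sum>P\<in>F. \<bar>q P\<bar> * (\<bar>2 * Re (P $$ (0,1))\<bar> + \<bar>2 * Im (P $$ (0,1))\<bar> + \<bar>Re (P $$ (0,0)) - Re (P $$ (1,1))\<bar>))"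
      by (simp add: sum.distrib[symmetric] distrib_left)
    moreover have "\<dots> \<le> (\<Sum>P\<in>F. \<bar>q P\<bar> * 1)"
      using sub stab1_bloch by (intro sum_mono mult_left_mono) auto
    ultimately show ?thesis unfolding s_def R_def by simp
  qed
  have psdb: "psd 2 (bm 1 r1 r2 r3)" using psdr rb by simp
  have bq: "0 \<le> Re (qf 2 (bm 1 r1 r2 r3) v)" if "v \<in> carrier_vec 2" for v using psd_qf[OF psdb that] .
  have f1: "0 \<le> (1+r3)/2 + (1-r3)/2 * 1 + r1" using bq[of "vec 2 (\<lambda>i. if i = 0 then 1 else 1)"]
    unfolding bm_qf1 by simp
  have f2: "0 \<le> (1+r3)/2 + (1-r3)/2 * 1 - r1" using bq[of "vec 2 (\<lambda>i. if i = 0 then 1 else -1)"]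
    unfolding bm_qf1 by simp
  have f3: "0 \<le> (1+r3)/2 + (1-r3)/2 * 1 + r2" using bq[of "vec 2 (\<lambda>i. if i = 0 then 1 else \<i>)"]
    unfolding bm_qf1 by simp
  have f4: "0 \<le> (1+r3)/2 + (1-r3)/2 * 1 - r2" using bq[of "vec 2 (\<lambda>i. if i = 0 then 1 else - \<i>)"]
    unfolding bm_qf1 by simp
  have f5: "0 \<le> (1+r3)/2" using bq[of "vec 2 (\<lambda>i. if i = 0 then 1 else 0)"]
    unfolding bm_qf1 by simp
  have f6: "0 \<le> (1-r3)/2" using bq[of "vec 2 (\<lambda>i. if i = 0 then 0 else 1)"]
    unfolding bm_qf0 by simp
  have ab: "\<bar>r1\<bar> \<le> 1" "\<bar>r2\<bar> \<le> 1" "\<bar>r3\<bar> \<le> 1"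
    unfolding abs_le_iff using f1 f2 f3 f4 f5 f6 by (simp_all add: field_simps)
  have sp: "0 < 1 + sqrt (2::real)" by (simp add: add_pos_nonneg)
  show "(1 + sqrt 2) * gen_robustness 1 \<rho> - sqrt 2 \<le> (\<Sum>P\<in>F. \<bar>q P\<bar>)"
  proof (cases "s \<le> 1")
    case True
    have mix: "bm 1 r1 r2 r3 \<in> stab_mixed 1" using True unfolding s_def by (rule bm_mixed)
    have "psd (2^1) (of_real 1 \<cdot>\<^sub>m bm 1 r1 r2 r3 - \<rho>)"
      unfolding rb bm_lin using bm_psd[of 0 0 0 0] by simp
    then have "gen_robustness 1 \<rho> \<le> 1" by (rule gen_le[OF dens mix])
    then have "(1 + sqrt 2) * gen_robustness 1 \<rho> \<le> (1 + sqrt 2) * 1" using sp by (intro mult_left_mono) auto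
    then show ?thesis using R1 unfolding R_def by simp
  next
    case False
    then have s1: "1 < s" by simp
    define l where "l = (s + sqrt 2)/(1 + sqrt 2)"
    obtain b1 b2 b3 where bs: "\<bar>b1\<bar> + \<bar>b2\<bar> + \<bar>b3\<bar> \<le> 1"
      and bq2: "(l * b1 - r1)^2 + (l * b2 - r2)^2 + (l * b3 - r3)^2 \<le> (l - 1)^2"
      using octa_sym[OF ab s1 s_def] unfolding l_def by blast
    have l1: "1 \<le> l" unfolding l_def using s1 sp by (simp add: field_simps)
    have mix: "bm 1 b1 b2 b3 \<in> stab_mixed 1" using bs by (rule bm_mixed)
    have "psd (2^1) (of_real l \<cdot>\<^sub>m bm 1 b1 b2 b3 - \<rho>)"
      unfolding rb bm_lin using bm_psd[of "l * 1 - 1" "l * b1 - r1" "l * b2 - r2" "l * b3 - r3"] l1 bq2 by simp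
    then have "gen_robustness 1 \<rho> \<le> l" by (rule gen_le[OF dens mix])
    then have "(1 + sqrt 2) * gen_robustness 1 \<rho> \<le> (1 + sqrt 2) * l" using sp by (intro mult_left_mono) auto
    also have "(1 + sqrt 2) * l = s + sqrt 2" unfolding l_def using sp by simp
    finally show ?thesis using sR unfolding R_def by simp
  qed
qed

theorem lemma5:
  fixes n :: nat and \<rho> :: "complex mat"
  assumes "density n \<rho>"
  shows "robustness n \<rho> \<ge> 2 * gen_robustness n \<rho> - 1 \<and>
         (n = 1 \<longrightarrow> robustness n \<rho> \<ge> (1 + sqrt 2) * gen_robustness n \<rho> - sqrt 2)"
  using part1[OF assms] part2[of \<rho>] assms by auto

end
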